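(* Let $G$ be a finitely generated group and $\phi\in\mathrm{Aut}(G)$. Then: (i) if $GCP_{Rat}(G\rtimes_\phi\mathbb{Z})$ is decidable, then $GBrCP_{(Rat,\phi)}(G)$ and $GTCP_{(Rat,\phi)}(G)$ are decidable; (ii) if $GCP_{Rat}(G\rtimes\mathbb{Z})$ is decidable, then $GBrCP_{Rat}(G)$ and $GTCP_{Rat}(G)$ are decidable; (iii) if $GCP_{Alg}(G\rtimes_\phi\mathbb{Z})$ is decidable, then $GBrCP_{(Alg,\phi)}(G)$ and $GTCP_{(Alg,\phi)}(G)$ are decidable; (iv) if $GCP_{Alg}(G\rtimes\mathbb{Z})$ is decidable, then $GBrCP_{Alg}(G)$ and $GTCP_{Alg}(G)$ are decidable.
   Context: $G\rtimes_\psi\mathbb{Z}$ is generated by $G$ and $t$ with $t^{-1}at=\psi(a)$. For a finitely generated group $X$ with finite generating set $A$ and canonical surjection $\pi:\tilde A^*\to X$ from the free monoid on $A\cup A^{-1}$, a subset $K\subseteq X$ is rational ($Rat$) if $K=L\pi$ for a rational language $L$, and algebraic ($Alg$) if $K=L\pi$ for a context-free language $L$ (given by automaton/grammar). For $\mathcal C\in\{Rat,Alg\}$: $GCP_{\mathcal C}(X)$: given $K\in\mathcal C(X)$ and $x\in X$, decide whether some conjugate of $x$ lies in $K$; $GCP_{\mathcal C}(G\rtimes\mathbb{Z})$ is the uniform version with the defining automorphism also part of the input. $GBrCP_{\mathcal C}(G)$: given $K\in\mathcal C(G)$, $\psi\in\mathrm{Aut}(G)$, $x\in G$, decide whether some $\psi^k(x)$,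 $k\in\mathbb{Z}$, is conjugate to an element of $K$. $GTCP_{\mathcal C}(G)$: given $K$, $\psi$, $x$, decide whether there is $z\in G$ with $\psi(z)^{-1}xz\in K$. The subscript $(\mathcal C,\phi)$ means the automorphism is fixed to be $\phi$. *)

theory Defs
  imports "HOL-Algebra.Algebra" "HOL-Library.Nat_Bijection"
begin

datatype recf = Zf | Sf | Proj nat | Comp recf "recf list" | Prec recf recf | Minf recf

inductive recf_eval :: "recf \<Rightarrow> nat list \<Rightarrow> nat \<Rightarrow> bool" where
  zero: "recf_eval Zf xs 0"
| succ: "recf_eval Sf (x # xs) (Suc x)"
| proj: "i < length xs \<Longrightarrow> recf_eval (Proj i) xs (xs ! i)"
| comp: "list_all2 (\<lambda>g y. recf_eval g xs y) gs ys \<Longrightarrow> recf_eval f ys r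
         \<Longrightarrow> recf_eval (Comp f gs) xs r"
| prec0: "recf_eval f xs r \<Longrightarrow> recf_eval (Prec f g) (0 # xs) r"
| precS: "recf_eval (Prec f g) (n # xs) r \<Longrightarrow> recf_eval g (n # r # xs) r'
         \<Longrightarrow> recf_eval (Prec f g) (Suc n # xs) r'"
| minf: "recf_eval f (n # xs) 0 \<Longrightarrow> (\<forall>m<n. \<exists>r. 0 < r \<and> recf_eval f (m # xs) r)
         \<Longrightarrow> recf_eval (Minf f) xs n"

definition decidable_on :: "'i set \<Rightarrow> ('i \<Rightarrow> nat) \<Rightarrow> ('i \<Rightarrow> bool) \<Rightarrow> bool" where
  "decidable_on V enc P \<longleftrightarrow>
     (\<exists>f. \<forall>x\<in>V. recf_eval f [enc x] (if P x then 1 else 0))"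

text \<open>An NFA: list of transitions (p, letter, q), initial states, final states.\<close>
type_synonym nfa = "(nat \<times> nat \<times> nat) list \<times> nat list \<times> nat list"

inductive nfa_run :: "(nat \<times> nat \<times> nat) list \<Rightarrow> nat \<Rightarrow> nat list \<Rightarrow> nat \<Rightarrow> bool" where
  "nfa_run T p [] p"
| "(p, a, q) \<in> set T \<Longrightarrow> nfa_run T q w r \<Longrightarrow> nfa_run T p (a # w) r"

definition nfa_lang :: "nfa \<Rightarrow> nat list \<Rightarrow> bool" where
  "nfa_lang A w \<longleftrightarrow> (case A of (T, I, F) \<Rightarrow>
     (\<exists>p\<in>set I. \<exists>q\<in>set F. nfa_run T p w q))"

definition nfa_enc :: "nfa \<Rightarrow> nat" where
  "nfa_enc A = (case A of (T, I, F) \<Rightarrow>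
     list_encode [list_encode (map (\<lambda>(p, a, q). prod_encode (p, prod_encode (a, q))) T),
                  list_encode I, list_encode F])"

text \<open>A CFG: productions (N, rhs) with rhs symbols Inl terminal / Inr nonterminal,
  and a start nonterminal.\<close>
type_synonym cfg = "(nat \<times> (nat + nat) list) list \<times> nat"

inductive cfg_gen :: "(nat \<times> (nat + nat) list) list \<Rightarrow> nat \<Rightarrow> nat list \<Rightarrow> bool"
  and cfg_genseq :: "(nat \<times> (nat + nat) list) list \<Rightarrow> (nat + nat) list \<Rightarrow> nat list \<Rightarrow> bool"
  for P where
  "(N, rhs) \<in> set P \<Longrightarrow> cfg_genseq P rhs w \<Longrightarrow> cfg_gen P N w"
| "cfg_genseq P [] []"
| "cfg_genseq P rhs w \<Longrightarrow> cfg_genseq P (Inl a # rhs) (a # w)"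
| "cfg_gen P N v \<Longrightarrow> cfg_genseq P rhs w \<Longrightarrow> cfg_genseq P (Inr N # rhs) (v @ w)"

definition cfg_lang :: "cfg \<Rightarrow> nat list \<Rightarrow> bool" where
  "cfg_lang C w \<longleftrightarrow> cfg_gen (fst C) (snd C) w"

definition sym_enc :: "nat + nat \<Rightarrow> nat" where
  "sym_enc s = (case s of Inl a \<Rightarrow> 2 * a | Inr N \<Rightarrow> 2 * N + 1)"

definition cfg_enc :: "cfg \<Rightarrow> nat" where
  "cfg_enc C = prod_encode
     (list_encode (map (\<lambda>(N, rhs). prod_encode (N, list_encode (map sym_enc rhs))) (fst C)),
      snd C)"

text \<open>With generators gens of length n, letter code c < 2n stands for gens!(c div 2)
  if c is even and for its inverse if c is odd.\<close>
definition alph_ok :: "nat \<Rightarrow> nat list \<Rightarrow> bool" where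
  "alph_ok n w \<longleftrightarrow> (\<forall>c\<in>set w. c < 2 * n)"

definition letter_val :: "('a, 'b) monoid_scheme \<Rightarrow> 'a list \<Rightarrow> nat \<Rightarrow> 'a" where
  "letter_val G gens c =
     (if even c then gens ! (c div 2) else inv\<^bsub>G\<^esub> (gens ! (c div 2)))"

definition word_val :: "('a, 'b) monoid_scheme \<Rightarrow> 'a list \<Rightarrow> nat list \<Rightarrow> 'a" where
  "word_val G gens w = foldr (\<lambda>c acc. letter_val G gens c \<otimes>\<^bsub>G\<^esub> acc) w \<one>\<^bsub>G\<^esub>"

definition aut_pow :: "('a, 'b) monoid_scheme \<Rightarrow> ('a \<Rightarrow> 'a) \<Rightarrow> int \<Rightarrow> 'a \<Rightarrow> 'a" where
  "aut_pow G \<phi> k = (if 0 \<le> k then \<phi> ^^ nat k else (inv_into (carrier G) \<phi>) ^^ nat (- k))"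

text \<open>Elements g t^k of G \<rtimes>_\<phi> Z as pairs (g, k), where t^-1 a t = \<phi> a.\<close>
definition sd_mult :: "('a, 'b) monoid_scheme \<Rightarrow> ('a \<Rightarrow> 'a) \<Rightarrow> 'a \<times> int \<Rightarrow> 'a \<times> int \<Rightarrow> 'a \<times> int" where
  "sd_mult G \<phi> x y = (case x of (g, k) \<Rightarrow> case y of (h, m) \<Rightarrow>
     (g \<otimes>\<^bsub>G\<^esub> aut_pow G \<phi> (- k) h, k + m))"

definition sd_inv :: "('a, 'b) monoid_scheme \<Rightarrow> ('a \<Rightarrow> 'a) \<Rightarrow> 'a \<times> int \<Rightarrow> 'a \<times> int" where
  "sd_inv G \<phi> x = (case x of (g, k) \<Rightarrow> (aut_pow G \<phi> k (inv\<^bsub>G\<^esub> g), - k))"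

text \<open>Generators of G \<rtimes> Z: gens together with t; codes c < 2n as for G,
  code 2n is t and code 2n+1 is t^-1.\<close>
definition sd_letter_val :: "('a, 'b) monoid_scheme \<Rightarrow> 'a list \<Rightarrow> nat \<Rightarrow> 'a \<times> int" where
  "sd_letter_val G gens c =
     (if c < 2 * length gens then (letter_val G gens c, 0)
      else if c = 2 * length gens then (\<one>\<^bsub>G\<^esub>, 1) else (\<one>\<^bsub>G\<^esub>, -1))"

definition sd_word_val :: "('a, 'b) monoid_scheme \<Rightarrow> ('a \<Rightarrow> 'a) \<Rightarrow> 'a list \<Rightarrow> nat list \<Rightarrow> 'a \<times> int" where
  "sd_word_val G \<phi> gens w =
     foldr (\<lambda>c acc. sd_mult G \<phi> (sd_letter_val G gens c) acc) w (\<one>\<^bsub>G\<^esub>, 0)"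

definition aut_words_ok :: "('a, 'b) monoid_scheme \<Rightarrow> 'a list \<Rightarrow> nat list list \<Rightarrow> bool" where
  "aut_words_ok G gens pw \<longleftrightarrow> length pw = length gens \<and> (\<forall>v\<in>set pw. alph_ok (length gens) v) \<and>
     (\<exists>\<psi>\<in>auto G. \<forall>i<length gens. \<psi> (gens ! i) = word_val G gens (pw ! i))"

definition aut_of :: "('a, 'b) monoid_scheme \<Rightarrow> 'a list \<Rightarrow> nat list list \<Rightarrow> 'a \<Rightarrow> 'a" where
  "aut_of G gens pw = (SOME \<psi>. \<psi> \<in> auto G \<and>
     (\<forall>i<length gens. \<psi> (gens ! i) = word_val G gens (pw ! i)))"

section \<open>The problems (lang: semantics of language descriptions, Rat or Alg)\<close>

definition GCP_sd_prop ::
  "('d \<Rightarrow> nat list \<Rightarrow> bool) \<Rightarrow> ('a, 'b) monoid_scheme \<Rightarrow> 'a list \<Rightarrow> ('a \<Rightarrow> 'a) \<Rightarrow> 'd \<Rightarrow> nat list \<Rightarrow> bool" where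
  "GCP_sd_prop lang G gens \<phi> L xw \<longleftrightarrow>
     (\<exists>w z. lang L w \<and> alph_ok (Suc (length gens)) w \<and> z \<in> carrier G \<times> (UNIV :: int set) \<and>
        sd_word_val G \<phi> gens w =
          sd_mult G \<phi> (sd_inv G \<phi> z) (sd_mult G \<phi> (sd_word_val G \<phi> gens xw) z))"

definition GBrCP_prop ::
  "('d \<Rightarrow> nat list \<Rightarrow> bool) \<Rightarrow> ('a, 'b) monoid_scheme \<Rightarrow> 'a list \<Rightarrow> ('a \<Rightarrow> 'a) \<Rightarrow> 'd \<Rightarrow> nat list \<Rightarrow> bool" where
  "GBrCP_prop lang G gens \<phi> L xw \<longleftrightarrow>
     (\<exists>(k::int) w z. lang L w \<and> alph_ok (length gens) w \<and> z \<in> carrier G \<and>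
        word_val G gens w = inv\<^bsub>G\<^esub> z \<otimes>\<^bsub>G\<^esub> aut_pow G \<phi> k (word_val G gens xw) \<otimes>\<^bsub>G\<^esub> z)"

definition GTCP_prop ::
  "('d \<Rightarrow> nat list \<Rightarrow> bool) \<Rightarrow> ('a, 'b) monoid_scheme \<Rightarrow> 'a list \<Rightarrow> ('a \<Rightarrow> 'a) \<Rightarrow> 'd \<Rightarrow> nat list \<Rightarrow> bool" where
  "GTCP_prop lang G gens \<phi> L xw \<longleftrightarrow>
     (\<exists>w z. lang L w \<and> alph_ok (length gens) w \<and> z \<in> carrier G \<and>
        word_val G gens w = inv\<^bsub>G\<^esub> (\<phi> z) \<otimes>\<^bsub>G\<^esub> word_val G gens xw \<otimes>\<^bsub>G\<^esub> z)"

text \<open>Fixed-automorphism versions: inputs (K, x).\<close>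
definition fixed_enc :: "('d \<Rightarrow> nat) \<Rightarrow> 'd \<times> nat list \<Rightarrow> nat" where
  "fixed_enc enc i = prod_encode (enc (fst i), list_encode (snd i))"

definition decidable_fixed ::
  "('d \<Rightarrow> nat) \<Rightarrow> nat \<Rightarrow> ('d \<Rightarrow> nat list \<Rightarrow> bool) \<Rightarrow> bool" where
  "decidable_fixed enc m P \<longleftrightarrow>
     decidable_on {i. alph_ok m (snd i)} (fixed_enc enc) (\<lambda>i. P (fst i) (snd i))"

text \<open>Uniform versions: inputs (automorphism as images of generators, K, x).\<close>
definition unif_enc :: "('d \<Rightarrow> nat) \<Rightarrow> nat list list \<times> 'd \<times> nat list \<Rightarrow> nat" where
  "unif_enc enc i = prod_encode (list_encode (map list_encode (fst i)),
                      prod_encode (enc (fst (snd i)), list_encode (snd (snd i))))"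

definition decidable_unif ::
  "('a, 'b) monoid_scheme \<Rightarrow> 'a list \<Rightarrow> ('d \<Rightarrow> nat) \<Rightarrow> nat \<Rightarrow>
     (('a \<Rightarrow> 'a) \<Rightarrow> 'd \<Rightarrow> nat list \<Rightarrow> bool) \<Rightarrow> bool" where
  "decidable_unif G gens enc m P \<longleftrightarrow>
     decidable_on {i. aut_words_ok G gens (fst i) \<and> alph_ok m (snd (snd i))} (unif_enc enc)
       (\<lambda>i. P (aut_of G gens (fst i)) (fst (snd i)) (snd (snd i)))"

end

theory Submission
  imports Defs
begin

definition rcp :: "nat \<Rightarrow> (nat list \<Rightarrow> nat) \<Rightarrow> bool" where
  "rcp k g \<longleftrightarrow> (\<exists>f. \<forall>xs. length xs = k \<longrightarrow> recf_eval f xs (g xs))"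

lemma rcp_cong: "rcp k f \<Longrightarrow> (\<And>xs. length xs = k \<Longrightarrow> f xs = g xs) \<Longrightarrow> rcp k g"
  unfolding rcp_def by metis

fun constf :: "nat \<Rightarrow> recf" where
  "constf 0 = Zf"
| "constf (Suc c) = Comp Sf [constf c]"

lemma constf_eval: "recf_eval (constf c) xs c"
proof (induction c)
  case 0 then show ?case by (simp add: recf_eval.zero)
next
  case (Suc c)
  have "list_all2 (\<lambda>g y. recf_eval g xs y) [constf c] [c]" using Suc by simp
  moreover have "recf_eval Sf [c] (Suc c)" by (rule recf_eval.succ)
  ultimately have "recf_eval (Comp Sf [constf c]) xs (Suc c)" by (rule recf_eval.comp)
  then show ?case by simp
qed

lemma rcp_const: "rcp k (\<lambda>_. c)"
  unfolding rcp_def using constf_eval by blast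

lemma rcp_proj: "i < k \<Longrightarrow> rcp k (\<lambda>xs. xs ! i)"
  unfolding rcp_def using recf_eval.proj by (metis)

lemma list_all_ex2: "list_all (\<lambda>g. \<exists>f. R f g) gs \<Longrightarrow> \<exists>fs. list_all2 R fs gs"
proof (induction gs)
  case Nil then show ?case by auto
next
  case (Cons g gs)
  then obtain f fs where "R f g" "list_all2 R fs gs" by auto
  then show ?case by (intro exI[of _ "f # fs"]) auto
qed

lemma rcp_comp:
  assumes "rcp (length gs) h" "list_all (rcp k) gs"
  shows "rcp k (\<lambda>xs. h (map (\<lambda>g. g xs) gs))"
proof -
  obtain fh where fh: "\<forall>ys. length ys = length gs \<longrightarrow> recf_eval fh ys (h ys)"
    using assms(1) unfolding rcp_def by blast
  have la: "list_all (\<lambda>g. \<exists>f. \<forall>xs. length xs = k \<longrightarrow> recf_eval f xs (g xs)) gs"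
    using assms(2) unfolding rcp_def .
  obtain fs where fs: "list_all2 (\<lambda>f g. \<forall>xs. length xs = k \<longrightarrow> recf_eval f xs (g xs)) fs gs"
    using list_all_ex2[OF la] by blast
  have "recf_eval (Comp fh fs) xs (h (map (\<lambda>g. g xs) gs))" if "length xs = k" for xs
  proof (rule recf_eval.comp)
    show "list_all2 (\<lambda>g y. recf_eval g xs y) fs (map (\<lambda>g. g xs) gs)"
      using fs that by (auto simp: list_all2_conv_all_nth)
    show "recf_eval fh (map (\<lambda>g. g xs) gs) (h (map (\<lambda>g. g xs) gs))"
      using fh by simp
  qed
  then show ?thesis unfolding rcp_def by blast
qed

lemma comp1: "rcp 1 (\<lambda>ys. H (ys!0)) \<Longrightarrow> rcp k a \<Longrightarrow> rcp k (\<lambda>xs. H (a xs))"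
  using rcp_comp[of "[a]" "\<lambda>ys. H (ys!0)" k] by simp

lemma comp2: "rcp 2 (\<lambda>ys. H (ys!0) (ys!1)) \<Longrightarrow> rcp k a \<Longrightarrow> rcp k b \<Longrightarrow> rcp k (\<lambda>xs. H (a xs) (b xs))"
  using rcp_comp[of "[a,b]" "\<lambda>ys. H (ys!0) (ys!1)" k] by (simp add: numeral_2_eq_2)

lemma comp3: "rcp 3 (\<lambda>ys. H (ys!0) (ys!1) (ys!2)) \<Longrightarrow> rcp k a \<Longrightarrow> rcp k b \<Longrightarrow> rcp k c
   \<Longrightarrow> rcp k (\<lambda>xs. H (a xs) (b xs) (c xs))"
  using rcp_comp[of "[a,b,c]" "\<lambda>ys. H (ys!0) (ys!1) (ys!2)" k] by (simp add: numeral_3_eq_3)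

fun PR :: "(nat list \<Rightarrow> nat) \<Rightarrow> (nat list \<Rightarrow> nat) \<Rightarrow> nat \<Rightarrow> nat list \<Rightarrow> nat" where
  "PR f g 0 ys = f ys"
| "PR f g (Suc n) ys = g (n # PR f g n ys # ys)"

lemma rcp_prec:
  assumes "rcp k f" "rcp (Suc (Suc k)) g"
  shows "rcp (Suc k) (\<lambda>xs. PR f g (hd xs) (tl xs))"
proof -
  obtain ff where ff: "\<forall>ys. length ys = k \<longrightarrow> recf_eval ff ys (f ys)"
    using assms(1) unfolding rcp_def by blast
  obtain gg where gg: "\<forall>ys. length ys = Suc (Suc k) \<longrightarrow> recf_eval gg ys (g ys)"
    using assms(2) unfolding rcp_def by blast
  have *: "recf_eval (Prec ff gg) (n # ys) (PR f g n ys)" if "length ys = k" for n ys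
  proof (induction n)
    case 0 then show ?case using ff that by (auto intro: recf_eval.prec0)
  next
    case (Suc n)
    have "recf_eval gg (n # PR f g n ys # ys) (g (n # PR f g n ys # ys))" using gg that by auto
    then show ?case using Suc by (auto intro: recf_eval.precS)
  qed
  show ?thesis unfolding rcp_def
  proof (intro exI allI impI)
    fix xs :: "nat list" assume "length xs = Suc k"
    then obtain n ys where "xs = n # ys" "length ys = k" by (cases xs) auto
    then show "recf_eval (Prec ff gg) xs (PR f g (hd xs) (tl xs))" using * by simp
  qed
qed

lemma rcp_min:
  assumes "rcp (Suc k) f" "\<And>xs. length xs = k \<Longrightarrow> \<exists>n. f (n # xs) = 0"
  shows "rcp k (\<lambda>xs. LEAST n. f (n # xs) = 0)"
proof -
  obtain ff where ff: "\<And>ys. length ys = Suc k \<Longrightarrow> recf_eval ff ys (f ys)"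
    using assms(1) unfolding rcp_def by blast
  show ?thesis unfolding rcp_def
  proof (intro exI allI impI)
    fix xs :: "nat list" assume l: "length xs = k"
    define n where "n = (LEAST n. f (n # xs) = 0)"
    obtain n0 where "f (n0 # xs) = 0" using assms(2)[OF l] by blast
    then have z: "f (n # xs) = 0" unfolding n_def by (rule LeastI)
    have "\<forall>m<n. \<exists>r. 0 < r \<and> recf_eval ff (m # xs) r"
    proof (intro allI impI)
      fix m assume "m < n"
      then have "f (m # xs) \<noteq> 0" unfolding n_def by (rule not_less_Least)
      moreover have "recf_eval ff (m # xs) (f (m # xs))" using ff l by simp
      ultimately show "\<exists>r. 0 < r \<and> recf_eval ff (m # xs) r" by blast
    qed
    moreover have "recf_eval ff (n # xs) 0" using ff[of "n # xs"] l z by simp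
    ultimately show "recf_eval (Minf ff) xs n" by (intro recf_eval.minf)
  qed
qed


lemma len2: "length xs = 2 \<Longrightarrow> xs = [xs!0, xs!1]"
  by (cases xs; cases "tl xs") (auto simp: numeral_2_eq_2)
lemma len1: "length xs = 1 \<Longrightarrow> xs = [xs!0]"
  by (cases xs) auto

lemma rcp_suc0: "rcp 1 (\<lambda>xs. Suc (xs!0))"
  unfolding rcp_def
  by (metis len1 recf_eval.succ)

lemma rcp_PR_eq:
  assumes "rcp k f" "rcp (Suc (Suc k)) g" "\<And>n ys. length ys = k \<Longrightarrow> PR f g n ys = F (n # ys)"
   "k' = Suc k"
  shows "rcp k' F"
  unfolding assms(4) using rcp_prec[OF assms(1,2)] by (rule rcp_cong) (metis assms(3) length_Suc_conv list.sel(1,3))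

lemma rcp_add0: "rcp 2 (\<lambda>xs. xs!0 + xs!1)"
  apply (rule rcp_PR_eq[where k=1 and f="\<lambda>ys. ys!0" and g="\<lambda>zs. Suc (zs!1)"])
  subgoal by (auto intro!: rcp_proj comp1[OF rcp_suc0])
  subgoal by (auto intro!: rcp_proj comp1[OF rcp_suc0])
  subgoal for n ys by (induction n) auto
  by simp

lemma rcp_comp_suc: "rcp k a \<Longrightarrow> rcp k (\<lambda>xs. Suc (a xs))"
  by (rule comp1[OF rcp_suc0])
lemma rcp_comp_add: "rcp k a \<Longrightarrow> rcp k b \<Longrightarrow> rcp k (\<lambda>xs. a xs + b xs)"
  by (rule comp2[OF rcp_add0])

lemma rcp_mult0: "rcp 2 (\<lambda>xs. xs!0 * xs!1)"
  apply (rule rcp_PR_eq[where k=1 and f="\<lambda>ys. 0" and g="\<lambda>zs. zs!1 + zs!2"])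
  subgoal by (auto intro!: rcp_proj rcp_const rcp_comp_add)
  subgoal by (auto intro!: rcp_proj rcp_const rcp_comp_add)
  subgoal for n ys by (induction n) auto
  by simp

lemma rcp_pred0: "rcp 1 (\<lambda>xs. xs!0 - 1)"
  apply (rule rcp_PR_eq[where k=0 and f="\<lambda>ys. 0" and g="\<lambda>zs. zs!0"])
  subgoal by (auto intro!: rcp_proj rcp_const)
  subgoal by (auto intro!: rcp_proj rcp_const)
  subgoal for n ys by (induction n) auto
  by simp

lemma rcp_monus0: "rcp 2 (\<lambda>xs. xs!1 - xs!0)"
  apply (rule rcp_PR_eq[where k=1 and f="\<lambda>ys. ys!0" and g="\<lambda>zs. zs!1 - 1"])
  subgoal by (auto intro!: rcp_proj)
  subgoal by (rule comp1[OF rcp_pred0], rule rcp_proj) simp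
  subgoal for n ys by (induction n) auto
  by simp

lemma rcp_comp_mult: "rcp k a \<Longrightarrow> rcp k b \<Longrightarrow> rcp k (\<lambda>xs. a xs * b xs)"
  by (rule comp2[OF rcp_mult0])
lemma rcp_comp_minus: "rcp k a \<Longrightarrow> rcp k b \<Longrightarrow> rcp k (\<lambda>xs. a xs - b xs)"
  by (rule comp2[where H="\<lambda>x y. x - y", OF comp2[where H="\<lambda>x y. y - x", OF rcp_monus0]])
     (auto intro: rcp_proj)

lemma rcp_comp_if:
  assumes "rcp k c" "rcp k a" "rcp k b"
  shows "rcp k (\<lambda>xs. if c xs = 0 then a xs else b xs)"
proof -
  have "rcp k (\<lambda>xs. (1 - c xs) * a xs + (1 - (1 - c xs)) * b xs)"
    using assms by (intro rcp_comp_add rcp_comp_mult rcp_comp_minus rcp_const)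
  then show ?thesis by (rule rcp_cong) auto
qed

lemma rcp_comp_less:
  assumes "rcp k c" "rcp k d" "rcp k a" "rcp k b"
  shows "rcp k (\<lambda>xs. if c xs < d xs then a xs else b xs)"
proof -
  have "rcp k (\<lambda>xs. if d xs - c xs = 0 then b xs else a xs)"
    using assms by (intro rcp_comp_if rcp_comp_minus)
  then show ?thesis by (rule rcp_cong) auto
qed

lemma rcp_mod2_0: "rcp 1 (\<lambda>xs. xs!0 mod 2)"
  apply (rule rcp_PR_eq[where k=0 and f="\<lambda>ys. 0" and g="\<lambda>zs. 1 - zs!1"])
  subgoal by (auto intro!: rcp_proj rcp_const rcp_comp_minus)
  subgoal by (auto intro!: rcp_proj rcp_const rcp_comp_minus)
  subgoal for n ys by (induction n) (auto simp: mod_Suc)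
  by simp

lemma rcp_tri0: "rcp 1 (\<lambda>xs. triangle (xs!0))"
  apply (rule rcp_PR_eq[where k=0 and f="\<lambda>ys. 0" and g="\<lambda>zs. zs!1 + Suc (zs!0)"])
  subgoal by (auto intro!: rcp_proj rcp_const rcp_comp_add rcp_comp_suc)
  subgoal by (auto intro!: rcp_proj rcp_const rcp_comp_add rcp_comp_suc)
  subgoal for n ys by (induction n) auto
  by simp

lemma rcp_comp_tri: "rcp k a \<Longrightarrow> rcp k (\<lambda>xs. triangle (a xs))"
  by (rule comp1[OF rcp_tri0])

lemma rcp_comp_pe: "rcp k a \<Longrightarrow> rcp k b \<Longrightarrow> rcp k (\<lambda>xs. prod_encode (a xs, b xs))"
  by (rule rcp_cong[where f="\<lambda>xs. triangle (a xs + b xs) + a xs"])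
     (auto intro!: rcp_comp_add rcp_comp_tri simp: prod_encode_def)

lemma triangle_mono: "m \<le> n \<Longrightarrow> triangle m \<le> triangle n"
  by (induction n) (auto simp: le_Suc_eq)

lemma least_tri: "(LEAST s. prod_encode (a, b) < triangle (Suc s)) = a + b"
proof (rule Least_equality)
  show "prod_encode (a, b) < triangle (Suc (a + b))" by (simp add: prod_encode_def)
next
  fix s assume s: "prod_encode (a, b) < triangle (Suc s)"
  show "a + b \<le> s"
  proof (rule ccontr)
    assume "\<not> a + b \<le> s"
    then have "triangle (Suc s) \<le> triangle (a + b)" by (intro triangle_mono) auto
    moreover have "triangle (a + b) \<le> prod_encode (a, b)" by (simp add: prod_encode_def)
    ultimately show False using s by linarith
  qed
qed

lemma decode_via_least:
  "prod_decode m = (m - triangle (LEAST s. m < triangle (Suc s)),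
                    (LEAST s. m < triangle (Suc s)) - (m - triangle (LEAST s. m < triangle (Suc s))))"
proof -
  obtain a b where m: "m = prod_encode (a, b)" by (metis prod_decode_inverse prod.exhaust)
  have e: "prod_encode (a,b) = triangle (a+b) + a" by (simp add: prod_encode_def)
  show ?thesis unfolding m least_tri prod_encode_inverse by (simp add: e)
qed

lemma rcp_least_tri: "rcp 1 (\<lambda>xs. LEAST s. xs!0 < triangle (Suc s))"
proof -
  have "rcp (Suc 1) (\<lambda>xs. Suc (xs!1) - triangle (Suc (xs!0)))"
    by (intro rcp_comp_minus rcp_comp_suc comp1[OF rcp_tri0] rcp_proj) auto
  then have "rcp 1 (\<lambda>xs. LEAST n. Suc ((n#xs)!1) - triangle (Suc ((n#xs)!0)) = 0)"
  proof (rule rcp_min)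
    fix xs :: "nat list"
    have "Suc (xs!0) \<le> triangle (Suc (xs!0))" by (induction "xs!0") auto
    then show "\<exists>n. Suc ((n#xs)!1) - triangle (Suc ((n#xs)!0)) = 0"
      by (intro exI[of _ "xs!0"]) auto
  qed
  then show ?thesis by (rule rcp_cong) (simp add: less_Suc_eq_le)
qed

lemma rcp_comp_pfst: "rcp k a \<Longrightarrow> rcp k (\<lambda>xs. fst (prod_decode (a xs)))"
  unfolding decode_via_least fst_conv
  by (intro rcp_comp_minus comp1[OF rcp_tri0] comp1[OF rcp_least_tri])

lemma rcp_comp_psnd: "rcp k a \<Longrightarrow> rcp k (\<lambda>xs. snd (prod_decode (a xs)))"
  unfolding decode_via_least snd_conv
  by (intro rcp_comp_minus comp1[OF rcp_tri0] comp1[OF rcp_least_tri])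

lemma rcp_comp_mod2: "rcp k a \<Longrightarrow> rcp k (\<lambda>xs. a xs mod 2)"
  by (rule comp1[OF rcp_mod2_0])


definition lhd :: "nat \<Rightarrow> nat" where "lhd c = fst (prod_decode (c - 1))"
definition ltl :: "nat \<Rightarrow> nat" where "ltl c = snd (prod_decode (c - 1))"
definition lcons :: "nat \<Rightarrow> nat \<Rightarrow> nat" where "lcons a b = Suc (prod_encode (a, b))"

lemma lhd_enc[simp]: "lhd (list_encode (x # xs)) = x" by (simp add: lhd_def)
lemma ltl_enc[simp]: "ltl (list_encode (x # xs)) = list_encode xs" by (simp add: ltl_def)
lemma lhd_Suc[simp]: "lhd (Suc (prod_encode (x, y))) = x" by (simp add: lhd_def)
lemma ltl_Suc[simp]: "ltl (Suc (prod_encode (x, y))) = y" by (simp add: ltl_def)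
lemma lcons_enc: "lcons x (list_encode xs) = list_encode (x # xs)" by (simp add: lcons_def)

lemma rcp_comp_lhd: "rcp k a \<Longrightarrow> rcp k (\<lambda>xs. lhd (a xs))"
  unfolding lhd_def by (intro rcp_comp_pfst rcp_comp_minus rcp_const)
lemma rcp_comp_ltl: "rcp k a \<Longrightarrow> rcp k (\<lambda>xs. ltl (a xs))"
  unfolding ltl_def by (intro rcp_comp_psnd rcp_comp_minus rcp_const)
lemma rcp_comp_lcons: "rcp k a \<Longrightarrow> rcp k b \<Longrightarrow> rcp k (\<lambda>xs. lcons (a xs) (b xs))"
  unfolding lcons_def by (intro rcp_comp_suc rcp_comp_pe)

definition fold_step :: "(nat \<Rightarrow> nat \<Rightarrow> nat \<Rightarrow> nat) \<Rightarrow> nat \<Rightarrow> nat \<Rightarrow> nat" where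
  "fold_step H p r = (if fst (prod_decode r) = 0 then r else
      prod_encode (ltl (fst (prod_decode r)), H (lhd (fst (prod_decode r))) (snd (prod_decode r)) p))"

definition LF :: "(nat \<Rightarrow> nat \<Rightarrow> nat \<Rightarrow> nat) \<Rightarrow> nat \<Rightarrow> nat \<Rightarrow> nat \<Rightarrow> nat" where
  "LF H p c a = foldl (\<lambda>acc e. H e acc p) a (list_decode c)"

lemma funpow_fix: "f r = r \<Longrightarrow> (f ^^ n) r = r"
  by (induction n) auto

lemma fold_step_iter:
  "(fold_step H p ^^ n) (prod_encode (list_encode l, a)) =
     prod_encode (list_encode (drop n l), foldl (\<lambda>acc e. H e acc p) a (take n l))"
proof (induction l arbitrary: n a)
  case Nil
  show ?case by (simp add: funpow_fix fold_step_def)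
next
  case (Cons x l)
  show ?case
  proof (cases n)
    case 0 then show ?thesis by simp
  next
    case (Suc m)
    have "fold_step H p (prod_encode (list_encode (x # l), a)) = prod_encode (list_encode l, H x a p)"
      by (simp add: fold_step_def)
    then show ?thesis using Cons[of m "H x a p"] Suc by (simp add: funpow_Suc_right del: funpow.simps)
  qed
qed

lemma length_le_list_encode: "length l \<le> list_encode l"
proof (induction l)
  case Nil then show ?case by simp
next
  case (Cons x l)
  then show ?case using le_prod_encode_2[of "list_encode l" x] by simp
qed

lemma LF_iter: "snd (prod_decode ((fold_step H p ^^ c) (prod_encode (c, a)))) = LF H p c a"
proof -
  obtain l where c: "c = list_encode l" by (metis list_decode_inverse)
  have "(fold_step H p ^^ c) (prod_encode (c, a)) =
     prod_encode (list_encode (drop c l), foldl (\<lambda>acc e. H e acc p) a (take c l))"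
    unfolding c by (rule fold_step_iter)
  moreover have "take c l = l" using length_le_list_encode[of l] c by simp
  ultimately show ?thesis unfolding LF_def c by simp
qed

lemma rcp_comp_LF:
  assumes H: "rcp 3 (\<lambda>ys. H (ys!0) (ys!1) (ys!2))"
    and p: "rcp k p" and c: "rcp k c" and a: "rcp k a"
  shows "rcp k (\<lambda>xs. LF H (p xs) (c xs) (a xs))"
proof -
  define f where "f = (\<lambda>ys::nat list. prod_encode (ys!1, ys!2))"
  define g where "g = (\<lambda>zs::nat list. fold_step H (zs!2) (zs!1))"
  have rf: "rcp 3 f" unfolding f_def by (intro rcp_comp_pe rcp_proj) auto
  have rg: "rcp (Suc (Suc 3)) g" unfolding g_def fold_step_def
    by (intro rcp_comp_if rcp_comp_pfst rcp_comp_pe rcp_comp_ltl comp3[OF H] rcp_comp_lhd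
              rcp_comp_psnd rcp_proj) auto
  have PReq: "PR f g n ys = (fold_step H (ys!0) ^^ n) (prod_encode (ys!1, ys!2))" for n ys
    by (induction n) (auto simp: f_def g_def)
  have r4: "rcp (Suc (Suc (Suc (Suc 0)))) (\<lambda>xs. PR f g (hd xs) (tl xs))"
    using rcp_prec[OF rf rg] by (simp add: numeral_3_eq_3)
  have "rcp k (\<lambda>xs. (\<lambda>ys. PR f g (hd ys) (tl ys)) (map (\<lambda>g. g xs) [c, p, c, a]))"
    by (rule rcp_comp) (use r4 p c a in auto)
  then have "rcp k (\<lambda>xs. snd (prod_decode (PR f g (c xs) [p xs, c xs, a xs])))"
    by (intro rcp_comp_psnd) simp
  then show ?thesis by (rule rcp_cong) (simp add: PReq LF_iter)
qed


lemma le_list_encode: "x \<in> set l \<Longrightarrow> x \<le> list_encode l"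
proof (induction l)
  case Nil then show ?case by simp
next
  case (Cons y l)
  then show ?case using le_prod_encode_1[of y "list_encode l"] le_prod_encode_2[of "list_encode l" y]
    by auto
qed

lemma foldl_filter_cons:
  "foldl (\<lambda>acc e. if P e then lcons e acc else acc) (list_encode L0) l = list_encode (rev (filter P l) @ L0)"
  by (induction l arbitrary: L0) (auto simp: lcons_enc simp del: list_encode.simps)

lemma foldl_map_cons:
  "foldl (\<lambda>acc e. lcons (f e) acc) (list_encode L0) l = list_encode (rev (map f l) @ L0)"
  by (induction l arbitrary: L0) (auto simp: lcons_enc simp del: list_encode.simps)

lemma foldl_all:
  "foldl (\<lambda>acc e. if P e then 0 else acc) a l = (if (\<exists>e\<in>set l. P e) then 0 else a)"
  by (induction l arbitrary: a) auto

section \<open>NFA transformations\<close>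

definition enc3 :: "nat \<times> nat \<times> nat \<Rightarrow> nat" where
  "enc3 t = (case t of (p, a, q) \<Rightarrow> prod_encode (p, prod_encode (a, q)))"

definition H_filtT :: "nat \<Rightarrow> nat \<Rightarrow> nat \<Rightarrow> nat \<Rightarrow> nat" where
  "H_filtT n e acc p = (if fst (prod_decode (snd (prod_decode e))) < 2 * n then lcons e acc else acc)"

definition filtT :: "nat \<Rightarrow> nat \<Rightarrow> nat" where
  "filtT n c = LF (H_filtT n) 0 c 0"

definition H_mapI :: "nat \<Rightarrow> nat \<Rightarrow> nat \<Rightarrow> nat \<Rightarrow> nat" where
  "H_mapI n e acc s = lcons (prod_encode (s, prod_encode (2 * n, e))) acc"

definition okT :: "nat \<Rightarrow> nat \<times> nat \<times> nat \<Rightarrow> bool" where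
  "okT n t = (fst (snd t) < 2 * n)"

lemma filtT_sem: "filtT n (list_encode (map enc3 T)) = list_encode (map enc3 (rev (filter (okT n) T)))"
proof -
  have "filtT n (list_encode (map enc3 T)) =
     foldl (\<lambda>acc e. if fst (prod_decode (snd (prod_decode e))) < 2 * n then lcons e acc else acc)
       (list_encode []) (map enc3 T)"
    by (simp add: filtT_def LF_def H_filtT_def)
  also have "\<dots> = list_encode (rev (filter (\<lambda>e. fst (prod_decode (snd (prod_decode e))) < 2 * n) (map enc3 T)))"
    by (simp add: foldl_filter_cons[of _ "[]", simplified])
  also have "filter (\<lambda>e. fst (prod_decode (snd (prod_decode e))) < 2 * n) (map enc3 T) = map enc3 (filter (okT n) T)"
    by (induction T) (auto simp: enc3_def okT_def)
  finally show ?thesis by (simp add: rev_map)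
qed

definition trBrN :: "nat \<Rightarrow> nat \<Rightarrow> nat" where
  "trBrN n i = prod_encode (lcons (filtT n (lhd (fst (prod_decode i)))) (ltl (fst (prod_decode i))),
                            snd (prod_decode i))"

definition trTcN :: "nat \<Rightarrow> nat \<Rightarrow> nat" where
  "trTcN n i = prod_encode (lcons (LF (H_mapI n) (Suc (fst (prod_decode i))) (lhd (ltl (fst (prod_decode i))))
                                     (filtT n (lhd (fst (prod_decode i)))))
                                (lcons (lcons (Suc (fst (prod_decode i))) 0) (ltl (ltl (fst (prod_decode i))))),
                            lcons (2 * n) (snd (prod_decode i)))"

lemma nfa_enc_eq: "nfa_enc (T, I, F) = list_encode [list_encode (map enc3 T), list_encode I, list_encode F]"
  by (simp add: nfa_enc_def enc3_def[abs_def])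

lemma trBrN_sem:
  "trBrN n (fixed_enc nfa_enc ((T, I, F), xw)) = fixed_enc nfa_enc ((rev (filter (okT n) T), I, F), xw)"
  unfolding trBrN_def fixed_enc_def
  by (simp add: nfa_enc_eq filtT_sem lcons_enc del: list_encode.simps(2))

definition newT :: "nat \<Rightarrow> nat \<Rightarrow> nat list \<Rightarrow> (nat \<times> nat \<times> nat) list" where
  "newT n s I = rev (map (\<lambda>p. (s, 2 * n, p)) I)"

lemma trTcN_sem:
  "trTcN n (fixed_enc nfa_enc ((T, I, F), xw)) =
     fixed_enc nfa_enc ((newT n (Suc (nfa_enc (T, I, F))) I @ rev (filter (okT n) T),
                         [Suc (nfa_enc (T, I, F))], F), 2 * n # xw)"
proof -
  define s where "s = Suc (nfa_enc (T, I, F))"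
  define Tc where "Tc = list_encode (map enc3 T)"
  have "LF (H_mapI n) s (list_encode I) (list_encode (map enc3 (rev (filter (okT n) T)))) =
        list_encode (rev (map (\<lambda>e. prod_encode (s, prod_encode (2 * n, e))) I) @ map enc3 (rev (filter (okT n) T)))"
    unfolding LF_def H_mapI_def list_encode_inverse by (rule foldl_map_cons)
  also have "\<dots> = list_encode (map enc3 (newT n s I @ rev (filter (okT n) T)))"
    by (simp add: newT_def enc3_def comp_def rev_map del: list_encode.simps)
  finally have e: "LF (H_mapI n) s (list_encode I) (filtT n Tc) =
     list_encode (map enc3 (newT n s I @ rev (filter (okT n) T)))" unfolding Tc_def filtT_sem .
  have c: "fixed_enc nfa_enc ((T, I, F), xw) = prod_encode (list_encode [Tc, list_encode I, list_encode F], list_encode xw)"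
    unfolding fixed_enc_def Tc_def by (simp only: nfa_enc_eq fst_conv snd_conv)
  have s': "Suc (fst (prod_decode (fixed_enc nfa_enc ((T, I, F), xw)))) = s"
    unfolding s_def fixed_enc_def by simp
  have "trTcN n (fixed_enc nfa_enc ((T, I, F), xw)) =
     prod_encode (lcons (LF (H_mapI n) s (list_encode I) (filtT n Tc))
                    (lcons (lcons s 0) (list_encode [list_encode F])), lcons (2 * n) (list_encode xw))"
    unfolding trTcN_def s' unfolding c by (simp only: prod_encode_inverse fst_conv snd_conv lhd_enc ltl_enc)
  also have "\<dots> = fixed_enc nfa_enc ((newT n s I @ rev (filter (okT n) T), [s], F), 2 * n # xw)"
    unfolding e fixed_enc_def nfa_enc_eq fst_conv snd_conv
    by (simp only: lcons_enc list_encode.simps(1)[symmetric])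
  finally show ?thesis unfolding s_def .
qed

section \<open>CFG transformations\<close>

definition H_all :: "nat \<Rightarrow> nat \<Rightarrow> nat \<Rightarrow> nat \<Rightarrow> nat" where
  "H_all n e acc p = (if e mod 2 = 0 then (if e < 4 * n then acc else 0) else acc)"

definition allok :: "nat \<Rightarrow> nat \<Rightarrow> nat" where
  "allok n r = LF (H_all n) 0 r 1"

definition H_filtP :: "nat \<Rightarrow> nat \<Rightarrow> nat \<Rightarrow> nat \<Rightarrow> nat" where
  "H_filtP n e acc p = (if allok n (snd (prod_decode e)) = 0 then acc else lcons e acc)"

definition filtP :: "nat \<Rightarrow> nat \<Rightarrow> nat" where
  "filtP n c = LF (H_filtP n) 0 c 0"

definition okS :: "nat \<Rightarrow> nat + nat \<Rightarrow> bool" where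
  "okS n s = (case s of Inl a \<Rightarrow> a < 2 * n | Inr _ \<Rightarrow> True)"

definition okP :: "nat \<Rightarrow> nat \<times> (nat + nat) list \<Rightarrow> bool" where
  "okP n pr = (\<forall>s\<in>set (snd pr). okS n s)"

definition penc :: "nat \<times> (nat + nat) list \<Rightarrow> nat" where
  "penc pr = prod_encode (fst pr, list_encode (map sym_enc (snd pr)))"

lemma allok_sem: "allok n (list_encode (map sym_enc rhs)) = (if (\<forall>s\<in>set rhs. okS n s) then 1 else 0)"
proof -
  have fe: "(\<lambda>acc e. H_all n e acc 0) = (\<lambda>acc e. if e mod 2 = 0 \<and> \<not> e < 4 * n then 0 else acc)"
    by (auto simp: fun_eq_iff H_all_def)
  have "allok n (list_encode (map sym_enc rhs)) =
    foldl (\<lambda>acc e. if e mod 2 = 0 \<and> \<not> e < 4 * n then 0 else acc) 1 (map sym_enc rhs)"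
    unfolding allok_def LF_def list_encode_inverse fe by simp
  also have "\<dots> = (if (\<exists>e\<in>set (map sym_enc rhs). e mod 2 = 0 \<and> \<not> e < 4 * n) then 0 else 1)"
    by (rule foldl_all)
  also have "(\<exists>e\<in>set (map sym_enc rhs). e mod 2 = 0 \<and> \<not> e < 4 * n) \<longleftrightarrow> \<not> (\<forall>s\<in>set rhs. okS n s)"
    by (auto simp: sym_enc_def okS_def split: sum.splits)
  finally show ?thesis by simp
qed

lemma filtP_sem: "filtP n (list_encode (map penc P)) = list_encode (map penc (rev (filter (okP n) P)))"
proof -
  have fe: "(\<lambda>acc e. H_filtP n e acc 0) = (\<lambda>acc e. if allok n (snd (prod_decode e)) \<noteq> 0 then lcons e acc else acc)"
    by (auto simp: fun_eq_iff H_filtP_def)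
  have "filtP n (list_encode (map penc P)) =
     foldl (\<lambda>acc e. if allok n (snd (prod_decode e)) \<noteq> 0 then lcons e acc else acc)
       (list_encode []) (map penc P)"
    unfolding filtP_def LF_def list_encode_inverse fe by simp
  also have "\<dots> = list_encode (rev (filter (\<lambda>e. allok n (snd (prod_decode e)) \<noteq> 0) (map penc P)))"
    by (simp only: foldl_filter_cons append_Nil2)
  also have "filter (\<lambda>e. allok n (snd (prod_decode e)) \<noteq> 0) (map penc P) = map penc (filter (okP n) P)"
    by (induction P) (auto simp: penc_def allok_sem okP_def)
  finally show ?thesis by (simp add: rev_map)
qed

lemma cfg_enc_eq: "cfg_enc (P, S) = prod_encode (list_encode (map penc P), S)"
proof -
  have "(\<lambda>(N, rhs). prod_encode (N, list_encode (map sym_enc rhs))) = penc"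
    by (auto simp: penc_def fun_eq_iff)
  then show ?thesis by (simp add: cfg_enc_def)
qed

definition trBrC :: "nat \<Rightarrow> nat \<Rightarrow> nat" where
  "trBrC n i = prod_encode (prod_encode (filtP n (fst (prod_decode (fst (prod_decode i)))),
                                         snd (prod_decode (fst (prod_decode i)))),
                            snd (prod_decode i))"

definition trTcC :: "nat \<Rightarrow> nat \<Rightarrow> nat" where
  "trTcC n i = prod_encode (prod_encode (lcons (prod_encode (Suc (fst (prod_decode i)),
         lcons (4 * n) (lcons (2 * snd (prod_decode (fst (prod_decode i))) + 1) 0)))
         (filtP n (fst (prod_decode (fst (prod_decode i))))), Suc (fst (prod_decode i))),
       lcons (2 * n) (snd (prod_decode i)))"

lemma trBrC_sem:
  "trBrC n (fixed_enc cfg_enc ((P, S), xw)) = fixed_enc cfg_enc ((rev (filter (okP n) P), S), xw)"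
  unfolding trBrC_def fixed_enc_def by (simp add: cfg_enc_eq filtP_sem)

lemma trTcC_sem:
  "trTcC n (fixed_enc cfg_enc ((P, S), xw)) =
     fixed_enc cfg_enc (((Suc (cfg_enc (P, S)), [Inl (2 * n), Inr S]) # rev (filter (okP n) P),
                         Suc (cfg_enc (P, S))), 2 * n # xw)"
proof -
  have e: "lcons (4 * n) (lcons (2 * S + 1) 0) = list_encode (map sym_enc [Inl (2 * n), Inr S])"
    by (simp add: lcons_def sym_enc_def)
  show ?thesis
    unfolding trTcC_def fixed_enc_def
    by (simp only: cfg_enc_eq[of P S] prod_encode_inverse fst_conv snd_conv filtP_sem e
          lcons_enc list.map penc_def[symmetric] list_encode.simps)
       (simp add: cfg_enc_eq penc_def)
qed

lemma rcp_filtT: "rcp 1 (\<lambda>xs. filtT n (xs!0))"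
  unfolding filtT_def
  by (intro rcp_comp_LF rcp_proj rcp_const)
     (auto simp: H_filtT_def intro!: rcp_comp_less rcp_comp_pfst rcp_comp_psnd rcp_proj rcp_const rcp_comp_lcons)

lemma rcp_comp_filtT: "rcp k a \<Longrightarrow> rcp k (\<lambda>xs. filtT n (a xs))"
  by (rule comp1[OF rcp_filtT])

lemma rcp_allok: "rcp 1 (\<lambda>xs. allok n (xs!0))"
  unfolding allok_def
  by (intro rcp_comp_LF rcp_proj rcp_const)
     (auto simp: H_all_def intro!: rcp_comp_less rcp_comp_if rcp_comp_mod2 rcp_proj rcp_const)

lemma rcp_comp_allok: "rcp k a \<Longrightarrow> rcp k (\<lambda>xs. allok n (a xs))"
  by (rule comp1[OF rcp_allok])

lemma rcp_filtP: "rcp 1 (\<lambda>xs. filtP n (xs!0))"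
  unfolding filtP_def
  by (intro rcp_comp_LF rcp_proj rcp_const)
     (auto simp: H_filtP_def intro!: rcp_comp_if rcp_comp_allok rcp_comp_psnd rcp_proj rcp_comp_lcons)

lemma rcp_comp_filtP: "rcp k a \<Longrightarrow> rcp k (\<lambda>xs. filtP n (a xs))"
  by (rule comp1[OF rcp_filtP])

lemma rcp_trBrN: "rcp 1 (\<lambda>xs. trBrN n (xs!0))"
  unfolding trBrN_def
  by (intro rcp_comp_pe rcp_comp_lcons rcp_comp_filtT rcp_comp_lhd rcp_comp_ltl rcp_comp_pfst
            rcp_comp_psnd rcp_proj) auto

lemma rcp_trTcN: "rcp 1 (\<lambda>xs. trTcN n (xs!0))"
  unfolding trTcN_def
  by (intro rcp_comp_pe rcp_comp_lcons rcp_comp_LF rcp_comp_filtT rcp_comp_lhd rcp_comp_ltl rcp_comp_pfst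
            rcp_comp_psnd rcp_comp_suc rcp_proj rcp_const)
     (auto simp: H_mapI_def intro!: rcp_comp_lcons rcp_comp_pe rcp_proj rcp_const)

lemma rcp_trBrC: "rcp 1 (\<lambda>xs. trBrC n (xs!0))"
  unfolding trBrC_def
  by (intro rcp_comp_pe rcp_comp_filtP rcp_comp_pfst rcp_comp_psnd rcp_proj) auto

lemma rcp_trTcC: "rcp 1 (\<lambda>xs. trTcC n (xs!0))"
  unfolding trTcC_def
  by (intro rcp_comp_pe rcp_comp_lcons rcp_comp_filtP rcp_comp_pfst rcp_comp_psnd rcp_comp_suc
         rcp_comp_add rcp_comp_mult rcp_proj rcp_const) auto

lemma rcp_unif: "rcp 1 (\<lambda>xs. tr (xs!0)) \<Longrightarrow> rcp 1 (\<lambda>xs. prod_encode (fst (prod_decode (xs!0)), tr (snd (prod_decode (xs!0)))))"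
proof -
  assume tr: "rcp 1 (\<lambda>xs. tr (xs!0))"
  have "rcp 1 (\<lambda>xs. tr (snd (prod_decode (xs!0))))"
    by (rule comp1[OF tr]) (intro rcp_comp_psnd rcp_proj; simp)
  then show ?thesis by (intro rcp_comp_pe rcp_comp_pfst rcp_proj) auto
qed


lemma alph_ok_Cons[simp]: "alph_ok n (a # w) \<longleftrightarrow> a < 2 * n \<and> alph_ok n w"
  by (simp add: alph_ok_def)
lemma alph_ok_Nil[simp]: "alph_ok n []"
  by (simp add: alph_ok_def)
lemma alph_ok_append[simp]: "alph_ok n (v @ w) \<longleftrightarrow> alph_ok n v \<and> alph_ok n w"
  by (auto simp: alph_ok_def)

lemma nfa_run_Nil[simp]: "nfa_run T p [] q \<longleftrightarrow> p = q"
  by (auto intro: nfa_run.intros elim: nfa_run.cases)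

lemma nfa_run_Cons[simp]: "nfa_run T p (a # w) r \<longleftrightarrow> (\<exists>q. (p, a, q) \<in> set T \<and> nfa_run T q w r)"
proof
  assume "nfa_run T p (a # w) r"
  then show "\<exists>q. (p, a, q) \<in> set T \<and> nfa_run T q w r" by (cases rule: nfa_run.cases) auto
next
  assume "\<exists>q. (p, a, q) \<in> set T \<and> nfa_run T q w r"
  then obtain q where "(p, a, q) \<in> set T" "nfa_run T q w r" by blast
  then show "nfa_run T p (a # w) r" by (rule nfa_run.intros(2))
qed

lemma nfa_run_mono: "nfa_run T p w q \<Longrightarrow> set T \<subseteq> set T' \<Longrightarrow> nfa_run T' p w q"
  by (induction w arbitrary: p) auto

lemma nfa_run_filter:
  assumes "\<And>t. t \<in> set T' \<longleftrightarrow> t \<in> set T \<and> okT n t"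
  shows "nfa_run T' p w q \<longleftrightarrow> nfa_run T p w q \<and> alph_ok n w"
  by (induction w arbitrary: p) (auto simp: assms okT_def)

lemma nfa_Br: "nfa_lang (rev (filter (okT n) T), I, F) w \<longleftrightarrow> nfa_lang (T, I, F) w \<and> alph_ok n w"
proof -
  have a: "\<And>t. t \<in> set (rev (filter (okT n) T)) \<longleftrightarrow> t \<in> set T \<and> okT n t" by auto
  have "nfa_run (rev (filter (okT n) T)) p w q \<longleftrightarrow> nfa_run T p w q \<and> alph_ok n w" for p q
    by (rule nfa_run_filter[OF a])
  then show ?thesis unfolding nfa_lang_def by auto
qed

lemma nfa_bounds:
  "list_encode (map enc3 T) \<le> nfa_enc (T, I, F)" "list_encode I \<le> nfa_enc (T, I, F)"
  "list_encode F \<le> nfa_enc (T, I, F)"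
  unfolding nfa_enc_eq by (rule le_list_encode; simp)+

lemma nfa_fresh:
  assumes "s = Suc (nfa_enc (T, I, F))"
  shows "\<And>p a q. (p, a, q) \<in> set T \<Longrightarrow> p < s \<and> q < s"
    and "\<And>p. p \<in> set I \<Longrightarrow> p < s"
    and "\<And>p. p \<in> set F \<Longrightarrow> p < s"
proof -
  fix p a q assume "(p, a, q) \<in> set T"
  then have "enc3 (p, a, q) \<le> list_encode (map enc3 T)" by (intro le_list_encode) auto
  moreover have "p \<le> enc3 (p, a, q)" "q \<le> enc3 (p, a, q)"
    using le_prod_encode_1[of p "prod_encode (a, q)"] le_prod_encode_2[of "prod_encode (a, q)" p]
      le_prod_encode_2[of q a] by (auto simp: enc3_def)
  ultimately show "p < s \<and> q < s" using nfa_bounds(1)[where T=T and I=I and F=F] assms by linarith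
next
  fix p assume "p \<in> set I"
  then show "p < s" using le_list_encode[of p I] nfa_bounds(2)[where T=T and I=I and F=F] assms by linarith
next
  fix p assume "p \<in> set F"
  then show "p < s" using le_list_encode[of p F] nfa_bounds(3)[where T=T and I=I and F=F] assms by linarith
qed

lemma nfa_run_Tc:
  assumes fr: "\<And>p a q. (p, a, q) \<in> set T \<Longrightarrow> p < s \<and> q < s" and sub: "set Tf \<subseteq> set T"
  shows "nfa_run (newT n s I @ Tf) q w r \<Longrightarrow> q \<noteq> s \<Longrightarrow> nfa_run Tf q w r"
proof (induction w arbitrary: q)
  case Nil then show ?case by simp
next
  case (Cons a w)
  then obtain q' where m: "(q, a, q') \<in> set (newT n s I @ Tf)" and r: "nfa_run (newT n s I @ Tf) q' w r"
    by auto
  then have m': "(q, a, q') \<in> set Tf" using Cons.prems by (auto simp: newT_def)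
  then have "q' \<noteq> s" using fr[of q a q'] sub by auto
  then have "nfa_run Tf q' w r" using Cons.IH r by blast
  then show ?case using m' by auto
qed

lemma nfa_Tc:
  assumes s: "s = Suc (nfa_enc (T, I, F))"
  shows "nfa_lang (newT n s I @ rev (filter (okT n) T), [s], F) w \<longleftrightarrow>
         (\<exists>w0. w = 2 * n # w0 \<and> nfa_lang (T, I, F) w0 \<and> alph_ok n w0)"
proof
  let ?Tf = "rev (filter (okT n) T)"
  have a: "\<And>t. t \<in> set ?Tf \<longleftrightarrow> t \<in> set T \<and> okT n t" by auto
  have sub: "set ?Tf \<subseteq> set T" by auto
  note fr = nfa_fresh[OF s]
  assume "nfa_lang (newT n s I @ ?Tf, [s], F) w"
  then obtain r where run: "nfa_run (newT n s I @ ?Tf) s w r" and rF: "r \<in> set F"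
    unfolding nfa_lang_def by auto
  show "\<exists>w0. w = 2 * n # w0 \<and> nfa_lang (T, I, F) w0 \<and> alph_ok n w0"
  proof (cases w)
    case Nil then show ?thesis using run fr(3)[OF rF] by simp
  next
    case (Cons a w')
    then obtain q where m: "(s, a, q) \<in> set (newT n s I @ ?Tf)" and r: "nfa_run (newT n s I @ ?Tf) q w' r"
      using run by auto
    have "(s, a, q) \<notin> set ?Tf" using fr(1)[of s a q] by auto
    then have "(s, a, q) \<in> set (newT n s I)" using m by auto
    then have aq: "a = 2 * n" "q \<in> set I" by (auto simp: newT_def)
    then have "q \<noteq> s" using fr(2) by auto
    then have qs: "q \<noteq> s" .
    have "nfa_run ?Tf q w' r"
    proof (rule nfa_run_Tc[where T=T and s=s and Tf="?Tf" and n=n and I=I, rotated 2])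
      show "nfa_run (newT n s I @ ?Tf) q w' r" by (rule r)
      show "set ?Tf \<subseteq> set T" by (rule sub)
      show "q \<noteq> s" by (rule qs)
      fix p a q assume "(p, a, q) \<in> set T" then show "p < s \<and> q < s" by (rule fr(1))
    qed
    then have "nfa_run T q w' r \<and> alph_ok n w'" using nfa_run_filter[OF a] by blast
    then show ?thesis using Cons aq rF unfolding nfa_lang_def by auto
  qed
next
  let ?Tf = "rev (filter (okT n) T)"
  have a: "\<And>t. t \<in> set ?Tf \<longleftrightarrow> t \<in> set T \<and> okT n t" by auto
  assume "\<exists>w0. w = 2 * n # w0 \<and> nfa_lang (T, I, F) w0 \<and> alph_ok n w0"
  then obtain w0 p r where w: "w = 2 * n # w0" and p: "p \<in> set I" and rF: "r \<in> set F"
    and run: "nfa_run T p w0 r" and ok: "alph_ok n w0"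
    unfolding nfa_lang_def by auto
  have "nfa_run ?Tf p w0 r" using nfa_run_filter[OF a] run ok by blast
  then have "nfa_run (newT n s I @ ?Tf) p w0 r" by (rule nfa_run_mono) auto
  moreover have "(s, 2 * n, p) \<in> set (newT n s I @ ?Tf)" using p by (auto simp: newT_def)
  ultimately have "nfa_run (newT n s I @ ?Tf) s w r" unfolding w by auto
  then show "nfa_lang (newT n s I @ ?Tf, [s], F) w" unfolding nfa_lang_def using rF by auto
qed

lemma cfg_mono:
  assumes "set P \<subseteq> set Q"
  shows "cfg_gen P N w \<Longrightarrow> cfg_gen Q N w" and "cfg_genseq P r w \<Longrightarrow> cfg_genseq Q r w"
  by (induction rule: cfg_gen_cfg_genseq.inducts) (use assms in \<open>auto intro: cfg_gen_cfg_genseq.intros\<close>)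

lemma cfg_filter1:
  assumes "\<And>x. x \<in> set Pf \<longleftrightarrow> x \<in> set P \<and> okP n x"
  shows "cfg_gen Pf N w \<Longrightarrow> cfg_gen P N w \<and> alph_ok n w"
    and "cfg_genseq Pf r w \<Longrightarrow> (\<forall>s\<in>set r. okS n s) \<Longrightarrow> cfg_genseq P r w \<and> alph_ok n w"
proof (induction rule: cfg_gen_cfg_genseq.inducts)
  case (1 N rhs w)
  then show ?case using assms[of "(N, rhs)"] by (auto simp: okP_def intro: cfg_gen_cfg_genseq.intros)
next
  case 2 then show ?case by (auto intro: cfg_gen_cfg_genseq.intros)
next
  case (3 rhs w a) then show ?case by (auto simp: okS_def intro: cfg_gen_cfg_genseq.intros)
next
  case (4 N v rhs w) then show ?case by (auto intro: cfg_gen_cfg_genseq.intros)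
qed

lemma cfg_filter2:
  assumes "\<And>x. x \<in> set Pf \<longleftrightarrow> x \<in> set P \<and> okP n x"
  shows "cfg_gen P N w \<Longrightarrow> alph_ok n w \<Longrightarrow> cfg_gen Pf N w"
    and "cfg_genseq P r w \<Longrightarrow> alph_ok n w \<Longrightarrow> cfg_genseq Pf r w \<and> (\<forall>s\<in>set r. okS n s)"
proof (induction rule: cfg_gen_cfg_genseq.inducts)
  case (1 N rhs w)
  then show ?case using assms[of "(N, rhs)"] by (auto simp: okP_def intro: cfg_gen_cfg_genseq.intros)
next
  case 2 then show ?case by (auto intro: cfg_gen_cfg_genseq.intros)
next
  case (3 rhs w a) then show ?case by (auto simp: okS_def intro: cfg_gen_cfg_genseq.intros)
next
  case (4 N v rhs w) then show ?case by (auto simp: okS_def intro: cfg_gen_cfg_genseq.intros)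
qed

lemma cfg_Br: "cfg_lang (rev (filter (okP n) P), S) w \<longleftrightarrow> cfg_lang (P, S) w \<and> alph_ok n w"
proof -
  have a: "\<And>x. x \<in> set (rev (filter (okP n) P)) \<longleftrightarrow> x \<in> set P \<and> okP n x" by auto
  show ?thesis unfolding cfg_lang_def using cfg_filter1(1)[OF a] cfg_filter2(1)[OF a] by auto
qed

lemma cfg_fresh:
  assumes "S' = Suc (cfg_enc (P, S))"
  shows "\<And>N rhs. (N, rhs) \<in> set P \<Longrightarrow> N < S' \<and> Inr S' \<notin> set rhs"
    and "S < S'"
proof -
  have e: "cfg_enc (P, S) = prod_encode (list_encode (map penc P), S)" by (rule cfg_enc_eq)
  fix N rhs assume "(N, rhs) \<in> set P"
  then have "penc (N, rhs) \<le> list_encode (map penc P)" by (intro le_list_encode) auto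
  moreover have "list_encode (map penc P) \<le> cfg_enc (P, S)" unfolding e by (rule le_prod_encode_1)
  moreover have "N \<le> penc (N, rhs)" by (simp add: penc_def le_prod_encode_1)
  moreover have "M < S'" if "Inr M \<in> set rhs" for M
  proof -
    have "sym_enc (Inr M) \<le> list_encode (map sym_enc rhs)" using that by (intro le_list_encode) auto
    moreover have "list_encode (map sym_enc rhs) \<le> penc (N, rhs)" by (simp add: penc_def le_prod_encode_2)
    ultimately show ?thesis using \<open>penc (N, rhs) \<le> list_encode (map penc P)\<close>
        \<open>list_encode (map penc P) \<le> cfg_enc (P, S)\<close> assms by (simp add: sym_enc_def)
  qed
  ultimately show "N < S' \<and> Inr S' \<notin> set rhs" using assms by fastforce
next
  show "S < S'" using assms le_prod_encode_2[of S "list_encode (map penc P)"] by (simp add: cfg_enc_eq)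
qed

lemma cfg_Tc_aux:
  assumes fr: "\<And>N rhs. (N, rhs) \<in> set P \<Longrightarrow> N < S' \<and> Inr S' \<notin> set rhs"
    and sub: "set Pf \<subseteq> set P"
  shows "cfg_gen ((S', x) # Pf) N w \<Longrightarrow> N \<noteq> S' \<Longrightarrow> cfg_gen Pf N w"
    and "cfg_genseq ((S', x) # Pf) r w \<Longrightarrow> Inr S' \<notin> set r \<Longrightarrow> cfg_genseq Pf r w"
proof (induction rule: cfg_gen_cfg_genseq.inducts)
  case (1 N rhs w)
  then have "(N, rhs) \<in> set Pf" by auto
  then show ?case using 1 fr[of N rhs] sub by (auto intro: cfg_gen_cfg_genseq.intros)
next
  case 2 then show ?case by (auto intro: cfg_gen_cfg_genseq.intros)
next
  case (3 rhs w a) then show ?case by (auto intro: cfg_gen_cfg_genseq.intros)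
next
  case (4 N v rhs w) then show ?case by (auto intro: cfg_gen_cfg_genseq.intros)
qed

lemma cfg_Tc:
  assumes s: "S' = Suc (cfg_enc (P, S))"
  shows "cfg_lang ((S', [Inl (2 * n), Inr S]) # rev (filter (okP n) P), S') w \<longleftrightarrow>
         (\<exists>w0. w = 2 * n # w0 \<and> cfg_lang (P, S) w0 \<and> alph_ok n w0)"
proof
  let ?Pf = "rev (filter (okP n) P)"
  let ?P2 = "(S', [Inl (2 * n), Inr S]) # ?Pf"
  have a: "\<And>x. x \<in> set ?Pf \<longleftrightarrow> x \<in> set P \<and> okP n x" by auto
  note fr = cfg_fresh[OF s]
  have sub: "set ?Pf \<subseteq> set P" by auto
  assume "cfg_lang (?P2, S') w"
  then have "cfg_gen ?P2 S' w" by (simp add: cfg_lang_def)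
  then show "\<exists>w0. w = 2 * n # w0 \<and> cfg_lang (P, S) w0 \<and> alph_ok n w0"
  proof (cases rule: cfg_gen.cases)
    case (1 rhs)
    have "(S', rhs) \<notin> set ?Pf" using fr(1)[of S' rhs] by auto
    then have rhs: "rhs = [Inl (2 * n), Inr S]" using 1 by auto
    from 1(2)[unfolded rhs] obtain w1 where w: "w = 2 * n # w1" and g1: "cfg_genseq ?P2 [Inr S] w1"
      by (cases rule: cfg_genseq.cases) auto
    from g1 obtain v w2 where w1: "w1 = v @ w2" and gv: "cfg_gen ?P2 S v" and g2: "cfg_genseq ?P2 [] w2"
      by (cases rule: cfg_genseq.cases) auto
    from g2 have "w2 = []" by (cases rule: cfg_genseq.cases) auto
    have "cfg_gen ?Pf S v" using cfg_Tc_aux(1)[OF fr(1) sub gv] fr(2) by simp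
    then have "cfg_gen P S v \<and> alph_ok n v" using cfg_filter1(1)[OF a] by blast
    then show ?thesis using w w1 \<open>w2 = []\<close> by (auto simp: cfg_lang_def)
  qed
next
  let ?Pf = "rev (filter (okP n) P)"
  let ?P2 = "(S', [Inl (2 * n), Inr S]) # ?Pf"
  have a: "\<And>x. x \<in> set ?Pf \<longleftrightarrow> x \<in> set P \<and> okP n x" by auto
  assume "\<exists>w0. w = 2 * n # w0 \<and> cfg_lang (P, S) w0 \<and> alph_ok n w0"
  then obtain w0 where w: "w = 2 * n # w0" and g: "cfg_gen P S w0" and ok: "alph_ok n w0"
    by (auto simp: cfg_lang_def)
  have "cfg_gen ?Pf S w0" using cfg_filter2(1)[OF a g ok] .
  then have g2: "cfg_gen ?P2 S w0" by (rule cfg_mono(1)[rotated]) auto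
  have "cfg_genseq ?P2 [] []" by (rule cfg_gen_cfg_genseq.intros)
  then have "cfg_genseq ?P2 [Inr S] (w0 @ [])" by (rule cfg_gen_cfg_genseq.intros(4)[OF g2])
  then have "cfg_genseq ?P2 [Inl (2 * n), Inr S] (2 * n # w0)" by (auto intro: cfg_gen_cfg_genseq.intros)
  then have "cfg_gen ?P2 S' (2 * n # w0)" by (auto intro: cfg_gen_cfg_genseq.intros)
  then show "cfg_lang (?P2, S') w" using w by (simp add: cfg_lang_def)
qed


section \<open>Group theory\<close>

lemma auto_iso: "\<psi> \<in> auto G \<Longrightarrow> \<psi> \<in> iso G G"
  by (auto simp: auto_def iso_def Bij_def)

lemma funpow_iso: "f \<in> iso G G \<Longrightarrow> f ^^ m \<in> iso G G"
proof (induction m)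
  case 0 then show ?case using iso_set_refl by simp
next
  case (Suc m)
  then have "f \<circ> f ^^ m \<in> iso G G" by (intro iso_set_trans) auto
  then show ?case by (simp only: funpow.simps(2))
qed

locale autG = group G for G (structure) +
  fixes \<psi> assumes psi_auto: "\<psi> \<in> auto G"
begin

abbreviation "\<iota> \<equiv> inv_into (carrier G) \<psi>"

lemma psi_iso: "\<psi> \<in> iso G G" using psi_auto by (rule auto_iso)
lemma iota_iso: "\<iota> \<in> iso G G" using iso_set_sym[OF psi_iso] .

lemma iso_hom_inv: "h \<in> iso G G \<Longrightarrow> x \<in> carrier G \<Longrightarrow> h (inv x) = inv (h x)"
  by (rule group_hom.hom_inv)
     (auto simp: group_hom_def group_hom_axioms_def is_group iso_imp_homomorphism)

lemma iso_mult: "h \<in> iso G G \<Longrightarrow> x \<in> carrier G \<Longrightarrow> y \<in> carrier G \<Longrightarrow> h (x \<otimes> y) = h x \<otimes> h y"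
  by (rule hom_mult[OF iso_imp_homomorphism])

lemma iso_closed: "h \<in> iso G G \<Longrightarrow> x \<in> carrier G \<Longrightarrow> h x \<in> carrier G"
  by (auto simp: iso_def hom_def)

lemma iso_surj: "h \<in> iso G G \<Longrightarrow> y \<in> carrier G \<Longrightarrow> \<exists>x\<in>carrier G. h x = y"
  by (metis iso_iff imageE)

lemma psi_iota: "y \<in> carrier G \<Longrightarrow> \<psi> (\<iota> y) = y"
  using psi_iso by (intro f_inv_into_f) (auto simp: iso_iff)

lemma iota_psi: "y \<in> carrier G \<Longrightarrow> \<iota> (\<psi> y) = y"
  using psi_iso by (intro inv_into_f_f) (auto simp: iso_iff)

lemma aut_pow_iso: "aut_pow G \<psi> k \<in> iso G G"
  unfolding aut_pow_def using funpow_iso[OF psi_iso] funpow_iso[OF iota_iso] by auto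

lemma aut_pow_closed: "x \<in> carrier G \<Longrightarrow> aut_pow G \<psi> k x \<in> carrier G"
  by (rule iso_closed[OF aut_pow_iso])

lemma aut_pow_0[simp]: "aut_pow G \<psi> 0 = id"
  by (simp add: aut_pow_def)

lemma aut_pow_m1: "aut_pow G \<psi> (-1) = \<iota>"
  by (simp add: aut_pow_def)

lemma iota_funpow_closed: "y \<in> carrier G \<Longrightarrow> (\<iota> ^^ m) y \<in> carrier G"
  by (rule iso_closed[OF funpow_iso[OF iota_iso]])

lemma psi_comm: assumes y: "y \<in> carrier G" shows "\<psi> (aut_pow G \<psi> k y) = aut_pow G \<psi> k (\<psi> y)"
proof (cases "0 \<le> k")
  case True then show ?thesis by (simp add: aut_pow_def funpow_swap1)
next
  case False
  have "\<psi> ((\<iota> ^^ m) y) = (\<iota> ^^ m) (\<psi> y)" if "y \<in> carrier G" for m y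
  proof (induction m)
    case 0 then show ?case by simp
  next
    case (Suc m)
    have "\<psi> ((\<iota> ^^ Suc m) y) = (\<iota> ^^ m) y"
      using psi_iota[OF iota_funpow_closed[OF that, of m]] by simp
    also have "\<dots> = (\<iota> ^^ m) (\<iota> (\<psi> y))" using iota_psi[OF that] by simp
    also have "\<dots> = (\<iota> ^^ Suc m) (\<psi> y)" by (simp add: funpow_Suc_right del: funpow.simps)
    finally show ?case .
  qed
  then show ?thesis using False y by (simp add: aut_pow_def)
qed

lemma cancel1[simp]: "a \<in> carrier G \<Longrightarrow> b \<in> carrier G \<Longrightarrow> a \<otimes> (inv a \<otimes> b) = b"
  by (simp add: m_assoc[symmetric])
lemma cancel2[simp]: "a \<in> carrier G \<Longrightarrow> b \<in> carrier G \<Longrightarrow> inv a \<otimes> (a \<otimes> b) = b"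
  by (simp add: m_assoc[symmetric])

lemma psi_one[simp]: "\<psi> \<one> = \<one>"
  by (rule hom_one[OF iso_imp_homomorphism[OF psi_iso] is_group is_group])

definition tw :: "'a \<Rightarrow> 'a \<Rightarrow> bool" where
  "tw x y \<longleftrightarrow> (\<exists>u\<in>carrier G. x = inv (\<psi> u) \<otimes> y \<otimes> u)"

lemma psi_closed: "x \<in> carrier G \<Longrightarrow> \<psi> x \<in> carrier G"
  by (rule iso_closed[OF psi_iso])

lemma tw_trans: "tw x y \<Longrightarrow> tw y z \<Longrightarrow> z \<in> carrier G \<Longrightarrow> tw x z"
proof -
  assume "tw x y" "tw y z" "z \<in> carrier G"
  then obtain u v where u: "u \<in> carrier G" "x = inv (\<psi> u) \<otimes> y \<otimes> u"
    and v: "v \<in> carrier G" "y = inv (\<psi> v) \<otimes> z \<otimes> v" unfolding tw_def by blast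
  have "x = inv (\<psi> (v \<otimes> u)) \<otimes> z \<otimes> (v \<otimes> u)"
    using u v \<open>z \<in> carrier G\<close>
    by (simp add: iso_mult[OF psi_iso] psi_closed inv_mult_group m_assoc)
  then show "tw x z" unfolding tw_def using u v by blast
qed

lemma tw_sym: "tw x y \<Longrightarrow> y \<in> carrier G \<Longrightarrow> tw y x"
proof -
  assume "tw x y" "y \<in> carrier G"
  then obtain u where u: "u \<in> carrier G" "x = inv (\<psi> u) \<otimes> y \<otimes> u" unfolding tw_def by blast
  have "y = inv (\<psi> (inv u)) \<otimes> x \<otimes> inv u"
    using u \<open>y \<in> carrier G\<close>
    by (simp add: iso_hom_inv[OF psi_iso] psi_closed m_assoc)
  then show "tw y x" unfolding tw_def using u by blast
qed

lemma tw_refl: "x \<in> carrier G \<Longrightarrow> tw x x"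
  unfolding tw_def by (intro bexI[of _ "\<one>"]) auto

lemma tw_psi: "x \<in> carrier G \<Longrightarrow> tw (\<psi> x) x"
proof -
  assume x: "x \<in> carrier G"
  have "\<psi> x = inv (\<psi> (inv x)) \<otimes> x \<otimes> inv x"
    using x by (simp add: iso_hom_inv[OF psi_iso] psi_closed m_assoc)
  then show ?thesis unfolding tw_def using x by blast
qed

lemma tw_aut_pow: "x \<in> carrier G \<Longrightarrow> tw (aut_pow G \<psi> k x) x"
proof -
  assume x: "x \<in> carrier G"
  have p: "tw ((\<psi> ^^ m) x) x" for m
  proof (induction m)
    case 0 then show ?case using tw_refl[OF x] by simp
  next
    case (Suc m)
    have c: "(\<psi> ^^ m) x \<in> carrier G" by (rule iso_closed[OF funpow_iso[OF psi_iso] x])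
    show ?case using tw_trans[OF tw_psi[OF c] Suc x] by simp
  qed
  have i: "tw ((\<iota> ^^ m) x) x" for m
  proof (induction m)
    case 0 then show ?case using tw_refl[OF x] by simp
  next
    case (Suc m)
    have c: "(\<iota> ^^ m) x \<in> carrier G" by (rule iota_funpow_closed[OF x])
    have c': "\<iota> ((\<iota> ^^ m) x) \<in> carrier G" by (rule iso_closed[OF iota_iso c])
    have "tw (\<psi> (\<iota> ((\<iota> ^^ m) x))) (\<iota> ((\<iota> ^^ m) x))" by (rule tw_psi[OF c'])
    then have "tw ((\<iota> ^^ m) x) (\<iota> ((\<iota> ^^ m) x))" using psi_iota[OF c] by simp
    then have "tw (\<iota> ((\<iota> ^^ m) x)) ((\<iota> ^^ m) x)" using tw_sym c' by blast
    then show ?case using tw_trans[OF _ Suc x] by simp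
  qed
  show ?thesis unfolding aut_pow_def using p i by simp
qed

end


section \<open>Words and the reductions\<close>

lemma alph_ok_mono: "alph_ok n w \<Longrightarrow> alph_ok (Suc n) w"
  by (auto simp: alph_ok_def)

context autG
begin

lemma letter_closed:
  assumes "set gens \<subseteq> carrier G" "c < 2 * length gens"
  shows "letter_val G gens c \<in> carrier G"
proof -
  have "c div 2 < length gens" using assms(2) by auto
  then have "gens ! (c div 2) \<in> carrier G" using assms(1) nth_mem by blast
  then show ?thesis by (simp add: letter_val_def)
qed

lemma word_closed:
  assumes "set gens \<subseteq> carrier G" "alph_ok (length gens) w"
  shows "word_val G gens w \<in> carrier G"
  using assms(2)
proof (induction w)
  case Nil then show ?case by (simp add: word_val_def)
next
  case (Cons c w)
  then show ?case using letter_closed[OF assms(1)] by (simp add: word_val_def)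
qed

lemma word_val_Cons: "word_val G gens (c # w) = letter_val G gens c \<otimes> word_val G gens w"
  by (simp add: word_val_def)

lemma sd_word_val_Cons: "sd_word_val G \<psi> gens (c # w) = sd_mult G \<psi> (sd_letter_val G gens c) (sd_word_val G \<psi> gens w)"
  by (simp add: sd_word_val_def)

lemma sd_word_G:
  assumes "alph_ok (length gens) w"
  shows "sd_word_val G \<psi> gens w = (word_val G gens w, 0)"
  using assms
proof (induction w)
  case Nil then show ?case by (simp add: word_val_def sd_word_val_def)
next
  case (Cons c w)
  then show ?case
    by (simp add: sd_word_val_Cons word_val_Cons sd_letter_val_def sd_mult_def)
qed

lemma sd_word_t:
  assumes "set gens \<subseteq> carrier G" "alph_ok (length gens) w"
  shows "sd_word_val G \<psi> gens (2 * length gens # w) = (\<iota> (word_val G gens w), 1)"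
proof -
  have c: "\<iota> (word_val G gens w) \<in> carrier G"
    by (rule iso_closed[OF iota_iso word_closed[OF assms]])
  show ?thesis
    using c by (simp add: sd_word_val_Cons sd_word_G[OF assms(2)] sd_letter_val_def sd_mult_def aut_pow_m1)
qed

lemma conj0:
  assumes x: "x \<in> carrier G" and g: "g \<in> carrier G"
  shows "sd_mult G \<psi> (sd_inv G \<psi> (g, k)) (sd_mult G \<psi> (x, 0) (g, k)) =
    (inv (aut_pow G \<psi> k g) \<otimes> aut_pow G \<psi> k x \<otimes> aut_pow G \<psi> k g, 0)"
  using x g
  by (simp add: sd_mult_def sd_inv_def iso_mult[OF aut_pow_iso] iso_hom_inv[OF aut_pow_iso]
                aut_pow_closed m_assoc)

lemma conj1:
  assumes x: "x \<in> carrier G" and g: "g \<in> carrier G"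
  shows "sd_mult G \<psi> (sd_inv G \<psi> (g, k)) (sd_mult G \<psi> (\<iota> x, 1) (g, k)) =
    (inv (aut_pow G \<psi> k g) \<otimes> aut_pow G \<psi> k (\<iota> x) \<otimes> aut_pow G \<psi> k (\<iota> g), 1)"
proof -
  have ix: "\<iota> x \<in> carrier G" and ig: "\<iota> g \<in> carrier G"
    using x g by (auto intro: iso_closed[OF iota_iso])
  show ?thesis
    using x g ix ig
    by (simp add: sd_mult_def sd_inv_def aut_pow_m1 iso_mult[OF aut_pow_iso] iso_hom_inv[OF aut_pow_iso]
                aut_pow_closed m_assoc)
qed

lemma Br_equiv:
  assumes gens: "set gens \<subseteq> carrier G" and xw: "alph_ok (length gens) xw"
    and lang: "\<And>w. lang L' w \<longleftrightarrow> lang L w \<and> alph_ok (length gens) w"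
  shows "GCP_sd_prop lang G gens \<psi> L' xw \<longleftrightarrow> GBrCP_prop lang G gens \<psi> L xw"
proof
  let ?x = "word_val G gens xw"
  have x: "?x \<in> carrier G" by (rule word_closed[OF gens xw])
  assume "GCP_sd_prop lang G gens \<psi> L' xw"
  then obtain w g k where w: "lang L' w" and g: "g \<in> carrier G"
    and eq: "sd_word_val G \<psi> gens w =
      sd_mult G \<psi> (sd_inv G \<psi> (g, k)) (sd_mult G \<psi> (sd_word_val G \<psi> gens xw) (g, k))"
    unfolding GCP_sd_prop_def by auto
  have wl: "lang L w" "alph_ok (length gens) w" using w lang by auto
  have "word_val G gens w = inv (aut_pow G \<psi> k g) \<otimes> aut_pow G \<psi> k ?x \<otimes> aut_pow G \<psi> k g"
    using eq unfolding sd_word_G[OF wl(2)] sd_word_G[OF xw] conj0[OF x g] by simp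
  then show "GBrCP_prop lang G gens \<psi> L xw"
    unfolding GBrCP_prop_def using wl aut_pow_closed[OF g] by blast
next
  let ?x = "word_val G gens xw"
  have x: "?x \<in> carrier G" by (rule word_closed[OF gens xw])
  assume "GBrCP_prop lang G gens \<psi> L xw"
  then obtain k w z where wl: "lang L w" "alph_ok (length gens) w" and z: "z \<in> carrier G"
    and eq: "word_val G gens w = inv z \<otimes> aut_pow G \<psi> k ?x \<otimes> z"
    unfolding GBrCP_prop_def by auto
  obtain g where g: "g \<in> carrier G" "aut_pow G \<psi> k g = z" using iso_surj[OF aut_pow_iso z] by blast
  have "sd_word_val G \<psi> gens w =
      sd_mult G \<psi> (sd_inv G \<psi> (g, k)) (sd_mult G \<psi> (sd_word_val G \<psi> gens xw) (g, k))"
    unfolding sd_word_G[OF wl(2)] sd_word_G[OF xw] conj0[OF x g(1)] g(2) eq by simp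
  moreover have "lang L' w" "alph_ok (Suc (length gens)) w" using wl lang alph_ok_mono by auto
  ultimately show "GCP_sd_prop lang G gens \<psi> L' xw"
    unfolding GCP_sd_prop_def using g(1) by blast
qed

lemma Tc_equiv:
  assumes gens: "set gens \<subseteq> carrier G" and xw: "alph_ok (length gens) xw"
    and lang: "\<And>w. lang L' w \<longleftrightarrow> (\<exists>w0. w = 2 * length gens # w0 \<and> lang L w0 \<and> alph_ok (length gens) w0)"
  shows "GCP_sd_prop lang G gens \<psi> L' (2 * length gens # xw) \<longleftrightarrow> GTCP_prop lang G gens \<psi> L xw"
proof
  let ?x = "word_val G gens xw"
  have x: "?x \<in> carrier G" by (rule word_closed[OF gens xw])
  assume "GCP_sd_prop lang G gens \<psi> L' (2 * length gens # xw)"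
  then obtain w g k where w: "lang L' w" and g: "g \<in> carrier G"
    and eq: "sd_word_val G \<psi> gens w =
      sd_mult G \<psi> (sd_inv G \<psi> (g, k)) (sd_mult G \<psi> (sd_word_val G \<psi> gens (2 * length gens # xw)) (g, k))"
    unfolding GCP_sd_prop_def by auto
  obtain w0 where w0: "w = 2 * length gens # w0" "lang L w0" "alph_ok (length gens) w0"
    using w lang by auto
  let ?P = "aut_pow G \<psi> k"
  let ?v = "word_val G gens w0"
  have v: "?v \<in> carrier G" by (rule word_closed[OF gens w0(3)])
  have e1: "\<iota> ?v = inv (?P g) \<otimes> ?P (\<iota> ?x) \<otimes> ?P (\<iota> g)"
    using eq unfolding w0(1) sd_word_t[OF gens w0(3)] sd_word_t[OF gens xw] conj1[OF x g] by simp
  have ix: "\<iota> ?x \<in> carrier G" and ig: "\<iota> g \<in> carrier G" using x g by (auto intro: iso_closed[OF iota_iso])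
  have Pg: "?P g \<in> carrier G" and Pix: "?P (\<iota> ?x) \<in> carrier G" and Pig: "?P (\<iota> g) \<in> carrier G"
    using g ix ig by (auto intro: aut_pow_closed)
  have "?v = \<psi> (\<iota> ?v)" using psi_iota[OF v] by simp
  also have "\<dots> = \<psi> (inv (?P g)) \<otimes> \<psi> (?P (\<iota> ?x)) \<otimes> \<psi> (?P (\<iota> g))"
    unfolding e1 using Pg Pix Pig by (simp add: iso_mult[OF psi_iso])
  also have "\<dots> = inv (\<psi> (?P g)) \<otimes> ?P ?x \<otimes> ?P g"
    using Pg ix ig psi_comm[OF ix] psi_comm[OF ig] psi_iota[OF x] psi_iota[OF g]
    by (simp add: iso_hom_inv[OF psi_iso])
  finally have e2: "?v = inv (\<psi> (?P g)) \<otimes> ?P ?x \<otimes> ?P g" .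
  obtain u where u: "u \<in> carrier G" "?P ?x = inv (\<psi> u) \<otimes> ?x \<otimes> u"
    using tw_aut_pow[OF x, of k] unfolding tw_def by blast
  have "?v = inv (\<psi> (u \<otimes> ?P g)) \<otimes> ?x \<otimes> (u \<otimes> ?P g)"
    unfolding e2 u(2) using u(1) Pg x
    by (simp add: iso_mult[OF psi_iso] psi_closed inv_mult_group m_assoc)
  then show "GTCP_prop lang G gens \<psi> L xw"
    unfolding GTCP_prop_def using w0 u(1) Pg by blast
next
  let ?x = "word_val G gens xw"
  have x: "?x \<in> carrier G" by (rule word_closed[OF gens xw])
  assume "GTCP_prop lang G gens \<psi> L xw"
  then obtain w z where wl: "lang L w" "alph_ok (length gens) w" and z: "z \<in> carrier G"
    and eq: "word_val G gens w = inv (\<psi> z) \<otimes> ?x \<otimes> z"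
    unfolding GTCP_prop_def by auto
  have ix: "\<iota> ?x \<in> carrier G" and iz: "\<iota> z \<in> carrier G" using x z by (auto intro: iso_closed[OF iota_iso])
  have "\<iota> (word_val G gens w) = inv z \<otimes> \<iota> ?x \<otimes> \<iota> z"
    unfolding eq using x z psi_closed[OF z]
    by (simp add: iso_mult[OF iota_iso] iso_hom_inv[OF iota_iso] iota_psi)
  then have "sd_word_val G \<psi> gens (2 * length gens # w) =
      sd_mult G \<psi> (sd_inv G \<psi> (z, 0)) (sd_mult G \<psi> (sd_word_val G \<psi> gens (2 * length gens # xw)) (z, 0))"
    unfolding sd_word_t[OF gens wl(2)] sd_word_t[OF gens xw] conj1[OF x z] by simp
  moreover have "lang L' (2 * length gens # w)" using wl lang by auto
  moreover have "alph_ok (Suc (length gens)) (2 * length gens # w)" using wl(2) alph_ok_mono by auto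
  ultimately show "GCP_sd_prop lang G gens \<psi> L' (2 * length gens # xw)"
    unfolding GCP_sd_prop_def using z by blast
qed

end


lemma reduce:
  assumes dec: "decidable_on V enc P"
    and tr: "rcp 1 (\<lambda>xs. t (xs!0))"
    and h: "\<And>x. x \<in> V' \<Longrightarrow> \<exists>y\<in>V. enc y = t (enc' x) \<and> (P y \<longleftrightarrow> P' x)"
  shows "decidable_on V' enc' P'"
proof -
  obtain fd where fd: "\<And>x. x \<in> V \<Longrightarrow> recf_eval fd [enc x] (if P x then 1 else 0)"
    using dec unfolding decidable_on_def by blast
  obtain ft where ft: "\<And>xs. length xs = 1 \<Longrightarrow> recf_eval ft xs (t (xs!0))"
    using tr unfolding rcp_def by blast
  have "recf_eval (Comp fd [ft]) [enc' x] (if P' x then 1 else 0)" if x: "x \<in> V'" for x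
  proof -
    obtain y where y: "y \<in> V" "enc y = t (enc' x)" "P y \<longleftrightarrow> P' x" using h[OF x] by blast
    have "list_all2 (\<lambda>g r. recf_eval g [enc' x] r) [ft] [enc y]" using ft[of "[enc' x]"] y(2) by simp
    moreover have "recf_eval fd [enc y] (if P' x then 1 else 0)" using fd[OF y(1)] y(3) by simp
    ultimately show ?thesis by (rule recf_eval.comp)
  qed
  then show ?thesis unfolding decidable_on_def by blast
qed

lemma fixed_red:
  assumes dec: "decidable_fixed enc (Suc n) Q"
    and tr: "rcp 1 (\<lambda>xs. t (xs!0))"
    and h: "\<And>L xw. alph_ok n xw \<Longrightarrow> \<exists>L' xw'. alph_ok (Suc n) xw' \<and>
               fixed_enc enc (L', xw') = t (fixed_enc enc (L, xw)) \<and> (Q L' xw' \<longleftrightarrow> R L xw)"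
  shows "decidable_fixed enc n R"
  unfolding decidable_fixed_def
  apply (rule reduce[OF dec[unfolded decidable_fixed_def] tr])
  subgoal for x
  proof -
    assume "x \<in> {i. alph_ok n (snd i)}"
    then obtain L xw where x: "x = (L, xw)" "alph_ok n xw" by (cases x) auto
    then obtain L' xw' where "alph_ok (Suc n) xw'" "fixed_enc enc (L', xw') = t (fixed_enc enc (L, xw))"
       "Q L' xw' \<longleftrightarrow> R L xw" using h by blast
    then show ?thesis using x by (intro bexI[of _ "(L', xw')"]) auto
  qed
  done

lemma unif_enc_fixed: "unif_enc enc (pw, L, xw) = prod_encode (list_encode (map list_encode pw), fixed_enc enc (L, xw))"
  by (simp add: unif_enc_def fixed_enc_def)

lemma aut_of_auto: "aut_words_ok G gens pw \<Longrightarrow> aut_of G gens pw \<in> auto G"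
proof -
  assume "aut_words_ok G gens pw"
  then have "\<exists>\<psi>. \<psi> \<in> auto G \<and> (\<forall>i<length gens. \<psi> (gens ! i) = word_val G gens (pw ! i))"
    unfolding aut_words_ok_def by blast
  then show ?thesis unfolding aut_of_def by (rule someI_ex[THEN conjunct1])
qed

lemma unif_red:
  assumes dec: "decidable_unif G gens enc (Suc n) Q"
    and tr: "rcp 1 (\<lambda>xs. t (xs!0))"
    and h: "\<And>\<psi> L xw. \<psi> \<in> auto G \<Longrightarrow> alph_ok n xw \<Longrightarrow> \<exists>L' xw'. alph_ok (Suc n) xw' \<and>
               fixed_enc enc (L', xw') = t (fixed_enc enc (L, xw)) \<and> (Q \<psi> L' xw' \<longleftrightarrow> R \<psi> L xw)"
  shows "decidable_unif G gens enc n R"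
  unfolding decidable_unif_def
  apply (rule reduce[OF dec[unfolded decidable_unif_def] rcp_unif[OF tr]])
  subgoal for x
  proof -
    assume "x \<in> {i. aut_words_ok G gens (fst i) \<and> alph_ok n (snd (snd i))}"
    then obtain pw L xw where x: "x = (pw, L, xw)" "aut_words_ok G gens pw" "alph_ok n xw"
      by (cases x) auto
    have "aut_of G gens pw \<in> auto G" by (rule aut_of_auto[OF x(2)])
    then obtain L' xw' where y: "alph_ok (Suc n) xw'" "fixed_enc enc (L', xw') = t (fixed_enc enc (L, xw))"
       "Q (aut_of G gens pw) L' xw' \<longleftrightarrow> R (aut_of G gens pw) L xw" using h x(3) by blast
    show ?thesis
      using x y by (intro bexI[of _ "(pw, L', xw')"]) (auto simp: unif_enc_fixed)
  qed
  done

lemma autGI: "group G \<Longrightarrow> \<psi> \<in> auto G \<Longrightarrow> autG G \<psi>"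
  by (simp add: autG_def autG_axioms_def)

lemma h_BrN:
  assumes grp: "group G" and gens: "set gens \<subseteq> carrier G" and psi: "\<psi> \<in> auto G"
    and xw: "alph_ok (length gens) xw"
  shows "\<exists>L' xw'. alph_ok (Suc (length gens)) xw' \<and>
     fixed_enc nfa_enc (L', xw') = trBrN (length gens) (fixed_enc nfa_enc (L, xw)) \<and>
     (GCP_sd_prop nfa_lang G gens \<psi> L' xw' \<longleftrightarrow> GBrCP_prop nfa_lang G gens \<psi> L xw)"
proof -
  interpret autG G \<psi> by (rule autGI[OF grp psi])
  obtain T I F where L: "L = (T, I, F)" by (cases L) auto
  show ?thesis
    unfolding L trBrN_sem
    by (intro exI[of _ "(rev (filter (okT (length gens)) T), I, F)"] exI[of _ xw] conjI refl alph_ok_mono[OF xw] Br_equiv[OF gens xw] nfa_Br)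
qed

lemma h_TcN:
  assumes grp: "group G" and gens: "set gens \<subseteq> carrier G" and psi: "\<psi> \<in> auto G"
    and xw: "alph_ok (length gens) xw"
  shows "\<exists>L' xw'. alph_ok (Suc (length gens)) xw' \<and>
     fixed_enc nfa_enc (L', xw') = trTcN (length gens) (fixed_enc nfa_enc (L, xw)) \<and>
     (GCP_sd_prop nfa_lang G gens \<psi> L' xw' \<longleftrightarrow> GTCP_prop nfa_lang G gens \<psi> L xw)"
proof -
  interpret autG G \<psi> by (rule autGI[OF grp psi])
  obtain T I F where L: "L = (T, I, F)" by (cases L) auto
  have ok: "alph_ok (Suc (length gens)) (2 * length gens # xw)" using alph_ok_mono[OF xw] by simp
  show ?thesis
    unfolding L trTcN_sem
    by (intro exI[of _ "(newT (length gens) (Suc (nfa_enc (T, I, F))) I @ rev (filter (okT (length gens)) T),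
                         [Suc (nfa_enc (T, I, F))], F)"] exI[of _ "2 * length gens # xw"] conjI refl ok Tc_equiv[OF gens xw] nfa_Tc[OF refl])
qed

lemma h_BrC:
  assumes grp: "group G" and gens: "set gens \<subseteq> carrier G" and psi: "\<psi> \<in> auto G"
    and xw: "alph_ok (length gens) xw"
  shows "\<exists>L' xw'. alph_ok (Suc (length gens)) xw' \<and>
     fixed_enc cfg_enc (L', xw') = trBrC (length gens) (fixed_enc cfg_enc (L, xw)) \<and>
     (GCP_sd_prop cfg_lang G gens \<psi> L' xw' \<longleftrightarrow> GBrCP_prop cfg_lang G gens \<psi> L xw)"
proof -
  interpret autG G \<psi> by (rule autGI[OF grp psi])
  obtain P S where L: "L = (P, S)" by (cases L) auto
  show ?thesis
    unfolding L trBrC_sem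
    by (intro exI[of _ "(rev (filter (okP (length gens)) P), S)"] exI[of _ xw] conjI refl alph_ok_mono[OF xw] Br_equiv[OF gens xw] cfg_Br)
qed

lemma h_TcC:
  assumes grp: "group G" and gens: "set gens \<subseteq> carrier G" and psi: "\<psi> \<in> auto G"
    and xw: "alph_ok (length gens) xw"
  shows "\<exists>L' xw'. alph_ok (Suc (length gens)) xw' \<and>
     fixed_enc cfg_enc (L', xw') = trTcC (length gens) (fixed_enc cfg_enc (L, xw)) \<and>
     (GCP_sd_prop cfg_lang G gens \<psi> L' xw' \<longleftrightarrow> GTCP_prop cfg_lang G gens \<psi> L xw)"
proof -
  interpret autG G \<psi> by (rule autGI[OF grp psi])
  obtain P S where L: "L = (P, S)" by (cases L) auto
  have ok: "alph_ok (Suc (length gens)) (2 * length gens # xw)" using alph_ok_mono[OF xw] by simp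
  show ?thesis
    unfolding L trTcC_sem
    by (intro exI[of _ "((Suc (cfg_enc (P, S)), [Inl (2 * length gens), Inr S]) # rev (filter (okP (length gens)) P),
                         Suc (cfg_enc (P, S)))"] exI[of _ "2 * length gens # xw"] conjI refl ok Tc_equiv[OF gens xw] cfg_Tc[OF refl])
qed

theorem corollary3p10:
  fixes G :: "('a, 'b) monoid_scheme" and gens :: "'a list" and \<phi> :: "'a \<Rightarrow> 'a"
  assumes "group G"
    and "set gens \<subseteq> carrier G"
    and "generate G (set gens) = carrier G"
    and "\<phi> \<in> auto G"
  shows
    "(decidable_fixed nfa_enc (Suc (length gens)) (GCP_sd_prop nfa_lang G gens \<phi>) \<longrightarrow>
        decidable_fixed nfa_enc (length gens) (GBrCP_prop nfa_lang G gens \<phi>) \<and>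
        decidable_fixed nfa_enc (length gens) (GTCP_prop nfa_lang G gens \<phi>))
   \<and> (decidable_unif G gens nfa_enc (Suc (length gens)) (GCP_sd_prop nfa_lang G gens) \<longrightarrow>
        decidable_unif G gens nfa_enc (length gens) (GBrCP_prop nfa_lang G gens) \<and>
        decidable_unif G gens nfa_enc (length gens) (GTCP_prop nfa_lang G gens))
   \<and> (decidable_fixed cfg_enc (Suc (length gens)) (GCP_sd_prop cfg_lang G gens \<phi>) \<longrightarrow>
        decidable_fixed cfg_enc (length gens) (GBrCP_prop cfg_lang G gens \<phi>) \<and>
        decidable_fixed cfg_enc (length gens) (GTCP_prop cfg_lang G gens \<phi>))
   \<and> (decidable_unif G gens cfg_enc (Suc (length gens)) (GCP_sd_prop cfg_lang G gens) \<longrightarrow>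
        decidable_unif G gens cfg_enc (length gens) (GBrCP_prop cfg_lang G gens) \<and>
        decidable_unif G gens cfg_enc (length gens) (GTCP_prop cfg_lang G gens))"
proof (intro conjI impI)
  note grp = assms(1) and gens = assms(2) and phi = assms(4)
  assume d: "decidable_fixed nfa_enc (Suc (length gens)) (GCP_sd_prop nfa_lang G gens \<phi>)"
  show "decidable_fixed nfa_enc (length gens) (GBrCP_prop nfa_lang G gens \<phi>)"
    by (rule fixed_red[OF d rcp_trBrN h_BrN[OF grp gens phi]])
  show "decidable_fixed nfa_enc (length gens) (GTCP_prop nfa_lang G gens \<phi>)"
    by (rule fixed_red[OF d rcp_trTcN h_TcN[OF grp gens phi]])
next
  note grp = assms(1) and gens = assms(2)
  assume d: "decidable_unif G gens nfa_enc (Suc (length gens)) (GCP_sd_prop nfa_lang G gens)"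
  show "decidable_unif G gens nfa_enc (length gens) (GBrCP_prop nfa_lang G gens)"
    by (rule unif_red[OF d rcp_trBrN h_BrN[OF grp gens]])
  show "decidable_unif G gens nfa_enc (length gens) (GTCP_prop nfa_lang G gens)"
    by (rule unif_red[OF d rcp_trTcN h_TcN[OF grp gens]])
next
  note grp = assms(1) and gens = assms(2) and phi = assms(4)
  assume d: "decidable_fixed cfg_enc (Suc (length gens)) (GCP_sd_prop cfg_lang G gens \<phi>)"
  show "decidable_fixed cfg_enc (length gens) (GBrCP_prop cfg_lang G gens \<phi>)"
    by (rule fixed_red[OF d rcp_trBrC h_BrC[OF grp gens phi]])
  show "decidable_fixed cfg_enc (length gens) (GTCP_prop cfg_lang G gens \<phi>)"
    by (rule fixed_red[OF d rcp_trTcC h_TcC[OF grp gens phi]])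
next
  note grp = assms(1) and gens = assms(2)
  assume d: "decidable_unif G gens cfg_enc (Suc (length gens)) (GCP_sd_prop cfg_lang G gens)"
  show "decidable_unif G gens cfg_enc (length gens) (GBrCP_prop cfg_lang G gens)"
    by (rule unif_red[OF d rcp_trBrC h_BrC[OF grp gens]])
  show "decidable_unif G gens cfg_enc (length gens) (GTCP_prop cfg_lang G gens)"
    by (rule unif_red[OF d rcp_trTcC h_TcC[OF grp gens]])
qed

end
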